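(* Let $(A,\sigma)$ be a ribbon algebra in a braided monoidal category $\mathcal C$ which is also a Hopf algebra in $\mathcal C$ with invertible antipode $S$, and let $M$ be an $A$-bimodule in $\mathcal C$. Then the morphism $$\blacktriangleleft_R=\triangleleft\;\triangleright_{0,1}\,(\sigma S^{-1}\otimes\mathrm{id}^{\otimes2})\,\Psi_{0,1}\,(\mathrm{id}_M\otimes\Delta):M\otimes A\to M$$ is a right action of $A$ on $M$, i.e. $\blacktriangleleft_R(\blacktriangleleft_R\otimes\mathrm{id}_A)=\blacktriangleleft_R(\mathrm{id}_M\otimes\mu)$. (Here $\Psi_{0,1}:M\otimes A\otimes A\to A\otimes M\otimes A$ braids $M$ with the first copy of $A$.)
   Context: $\mathcal C$ is a braided monoidal category with abelian-group Hom-sets, bilinear composition and tensor product; associativity and unit constraints suppressed; unit object $\mathbf 1$; braiding $\Psi$. Composition read from right to left; in $V_0\otimes\cdots\otimes V_k$ (factors numbered from 0), $f_{i,i+1}$ denotes $f$ applied to factors $i,i+1$. An algebra in $\mathcal C$: object $A$ with associative unital $\mu:A\otimes A\to A$, $\eta:\mathbf 1\to A$. Ribbon algebra: algebra with invertible morphism $\sigma:A\to A$, $\sigma\mu=\mu(\sigma\otimes\sigma)\Psi^2$, $\sigma\eta=\eta$. A Hopf algebra in $\mathcal C$ is an algebra $A$ with morphisms $\Delta:A\to A\otimes A$, $\varepsilon:A\to\mathbf1$ forming a coassociative counital coalgebra, such that $\Delta\mu=(\mu\otimes\mu)\Psi_{1,2}(\Delta\otimes\Delta)$, $\varepsilon\mu=\varepsilon\otimes\varepsilon$,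 $\Delta\eta=\eta\otimes\eta$, $\varepsilon\eta=\mathrm{id}_{\mathbf 1}$, together with a morphism $S:A\to A$ (antipode) with $\mu(S\otimes\mathrm{id})\Delta=\eta\varepsilon=\mu(\mathrm{id}\otimes S)\Delta$. An $A$-bimodule in $\mathcal C$: object $M$ with morphisms $\triangleright:A\otimes M\to M$, $\triangleleft:M\otimes A\to M$, associative unital left resp. right actions with $\triangleright(\mathrm{id}\otimes\triangleleft)=\triangleleft(\triangleright\otimes\mathrm{id})$. *)

theory Defs
  imports Main
begin

text \<open>A (strict) braided monoidal category, given concretely: objects of type 'o,
morphisms of type 'm, partial composition (cmp g f = g after f, defined when
cd f = dm g), tensor on objects (tob) and morphisms (tar), unit object un and
braiding brd a b : a (x) b -> b (x) a.  Associativity and unit constraints are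
suppressed, i.e. the category is taken strict.\<close>

record ('o, 'm) bmc =
  Obj :: "'o set"
  Arr :: "'m set"
  dm  :: "'m \<Rightarrow> 'o"
  cd  :: "'m \<Rightarrow> 'o"
  cmp :: "'m \<Rightarrow> 'm \<Rightarrow> 'm"
  idm :: "'o \<Rightarrow> 'm"
  tob :: "'o \<Rightarrow> 'o \<Rightarrow> 'o"
  tar :: "'m \<Rightarrow> 'm \<Rightarrow> 'm"
  un  :: "'o"
  brd :: "'o \<Rightarrow> 'o \<Rightarrow> 'm"

definition hom :: "('o, 'm) bmc \<Rightarrow> 'o \<Rightarrow> 'o \<Rightarrow> 'm set" where
  "hom C a b = {f \<in> Arr C. dm C f = a \<and> cd C f = b}"

definition iso_mor :: "('o, 'm) bmc \<Rightarrow> 'm \<Rightarrow> 'o \<Rightarrow> 'o \<Rightarrow> bool" where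
  "iso_mor C f a b \<longleftrightarrow> f \<in> hom C a b \<and>
     (\<exists>g \<in> hom C b a. cmp C g f = idm C a \<and> cmp C f g = idm C b)"

definition braided_strict_monoidal :: "('o, 'm) bmc \<Rightarrow> bool" where
  "braided_strict_monoidal C \<longleftrightarrow>
   \<comment> \<open>category\<close>
   (\<forall>f \<in> Arr C. dm C f \<in> Obj C \<and> cd C f \<in> Obj C) \<and>
   (\<forall>a \<in> Obj C. idm C a \<in> hom C a a) \<and>
   (\<forall>a \<in> Obj C. \<forall>b \<in> Obj C. \<forall>c \<in> Obj C. \<forall>f \<in> hom C a b. \<forall>g \<in> hom C b c.
       cmp C g f \<in> hom C a c) \<and>
   (\<forall>f \<in> Arr C. cmp C (idm C (cd C f)) f = f \<and> cmp C f (idm C (dm C f)) = f) \<and>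
   (\<forall>f \<in> Arr C. \<forall>g \<in> Arr C. \<forall>h \<in> Arr C. cd C f = dm C g \<longrightarrow> cd C g = dm C h \<longrightarrow>
       cmp C h (cmp C g f) = cmp C (cmp C h g) f) \<and>
   \<comment> \<open>tensor product functor\<close>
   un C \<in> Obj C \<and>
   (\<forall>a \<in> Obj C. \<forall>b \<in> Obj C. tob C a b \<in> Obj C) \<and>
   (\<forall>f \<in> Arr C. \<forall>g \<in> Arr C.
       tar C f g \<in> hom C (tob C (dm C f) (dm C g)) (tob C (cd C f) (cd C g))) \<and>
   (\<forall>a \<in> Obj C. \<forall>b \<in> Obj C. tar C (idm C a) (idm C b) = idm C (tob C a b)) \<and>
   (\<forall>f \<in> Arr C. \<forall>f' \<in> Arr C. \<forall>g \<in> Arr C. \<forall>g' \<in> Arr C.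
       cd C f = dm C f' \<longrightarrow> cd C g = dm C g' \<longrightarrow>
       tar C (cmp C f' f) (cmp C g' g) = cmp C (tar C f' g') (tar C f g)) \<and>
   \<comment> \<open>strict associativity and unit\<close>
   (\<forall>a \<in> Obj C. \<forall>b \<in> Obj C. \<forall>c \<in> Obj C. tob C (tob C a b) c = tob C a (tob C b c)) \<and>
   (\<forall>f \<in> Arr C. \<forall>g \<in> Arr C. \<forall>h \<in> Arr C. tar C (tar C f g) h = tar C f (tar C g h)) \<and>
   (\<forall>a \<in> Obj C. tob C (un C) a = a \<and> tob C a (un C) = a) \<and>
   (\<forall>f \<in> Arr C. tar C (idm C (un C)) f = f \<and> tar C f (idm C (un C)) = f) \<and>
   \<comment> \<open>braiding: natural isomorphism satisfying the hexagon axioms\<close>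
   (\<forall>a \<in> Obj C. \<forall>b \<in> Obj C. iso_mor C (brd C a b) (tob C a b) (tob C b a)) \<and>
   (\<forall>f \<in> Arr C. \<forall>g \<in> Arr C.
       cmp C (tar C g f) (brd C (dm C f) (dm C g)) = cmp C (brd C (cd C f) (cd C g)) (tar C f g)) \<and>
   (\<forall>a \<in> Obj C. \<forall>b \<in> Obj C. \<forall>c \<in> Obj C.
       brd C a (tob C b c) = cmp C (tar C (idm C b) (brd C a c)) (tar C (brd C a b) (idm C c)) \<and>
       brd C (tob C a b) c = cmp C (tar C (brd C a c) (idm C b)) (tar C (idm C a) (brd C b c)))"

definition is_algebra :: "('o, 'm) bmc \<Rightarrow> 'o \<Rightarrow> 'm \<Rightarrow> 'm \<Rightarrow> bool" where
  "is_algebra C A mu eta \<longleftrightarrow>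
     A \<in> Obj C \<and> mu \<in> hom C (tob C A A) A \<and> eta \<in> hom C (un C) A \<and>
     cmp C mu (tar C mu (idm C A)) = cmp C mu (tar C (idm C A) mu) \<and>
     cmp C mu (tar C eta (idm C A)) = idm C A \<and>
     cmp C mu (tar C (idm C A) eta) = idm C A"

definition is_ribbon_algebra :: "('o, 'm) bmc \<Rightarrow> 'o \<Rightarrow> 'm \<Rightarrow> 'm \<Rightarrow> 'm \<Rightarrow> bool" where
  "is_ribbon_algebra C A mu eta sigma \<longleftrightarrow>
     is_algebra C A mu eta \<and> iso_mor C sigma A A \<and>
     cmp C sigma mu = cmp C mu (cmp C (tar C sigma sigma)
                        (cmp C (brd C A A) (brd C A A))) \<and>
     cmp C sigma eta = eta"

definition is_hopf_algebra ::
  "('o, 'm) bmc \<Rightarrow> 'o \<Rightarrow> 'm \<Rightarrow> 'm \<Rightarrow> 'm \<Rightarrow> 'm \<Rightarrow> 'm \<Rightarrow> bool" where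
  "is_hopf_algebra C A mu eta delta eps S \<longleftrightarrow>
     is_algebra C A mu eta \<and>
     delta \<in> hom C A (tob C A A) \<and> eps \<in> hom C A (un C) \<and> S \<in> hom C A A \<and>
     cmp C (tar C delta (idm C A)) delta = cmp C (tar C (idm C A) delta) delta \<and>
     cmp C (tar C eps (idm C A)) delta = idm C A \<and>
     cmp C (tar C (idm C A) eps) delta = idm C A \<and>
     cmp C delta mu = cmp C (tar C mu mu)
        (cmp C (tar C (idm C A) (tar C (brd C A A) (idm C A))) (tar C delta delta)) \<and>
     cmp C eps mu = tar C eps eps \<and>
     cmp C delta eta = tar C eta eta \<and>
     cmp C eps eta = idm C (un C) \<and>
     cmp C mu (cmp C (tar C S (idm C A)) delta) = cmp C eta eps \<and>
     cmp C mu (cmp C (tar C (idm C A) S) delta) = cmp C eta eps"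

definition is_bimodule ::
  "('o, 'm) bmc \<Rightarrow> 'o \<Rightarrow> 'm \<Rightarrow> 'm \<Rightarrow> 'o \<Rightarrow> 'm \<Rightarrow> 'm \<Rightarrow> bool" where
  "is_bimodule C A mu eta M lact ract \<longleftrightarrow>
     M \<in> Obj C \<and> lact \<in> hom C (tob C A M) M \<and> ract \<in> hom C (tob C M A) M \<and>
     cmp C lact (tar C mu (idm C M)) = cmp C lact (tar C (idm C A) lact) \<and>
     cmp C lact (tar C eta (idm C M)) = idm C M \<and>
     cmp C ract (tar C ract (idm C A)) = cmp C ract (tar C (idm C M) mu) \<and>
     cmp C ract (tar C (idm C M) eta) = idm C M \<and>
     cmp C lact (tar C (idm C A) ract) = cmp C ract (tar C lact (idm C A))"

definition twisted_ract ::
  "('o, 'm) bmc \<Rightarrow> 'o \<Rightarrow> 'o \<Rightarrow> 'm \<Rightarrow> 'm \<Rightarrow> 'm \<Rightarrow> 'm \<Rightarrow> 'm \<Rightarrow> 'm" where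
  "twisted_ract C A M delta sigma Sinv lact ract =
     cmp C ract (cmp C (tar C lact (idm C A))
       (cmp C (tar C (cmp C sigma Sinv) (tar C (idm C M) (idm C A)))
         (cmp C (tar C (brd C M A) (idm C A)) (tar C (idm C M) delta))))"

end

theory Submission
  imports Defs
begin

datatype ob = oA | oM
datatype gen = Mu | Eta | Dl | Ep | Sg | Si | Sm | Br ob ob | Bi | Lc | Rc

fun gdom :: "gen \<Rightarrow> ob list" where
  "gdom Mu = [oA,oA]" | "gdom Eta = []" | "gdom Dl = [oA]" | "gdom Ep = [oA]"
| "gdom Sg = [oA]" | "gdom Si = [oA]" | "gdom Sm = [oA]" | "gdom (Br x y) = [x,y]"
| "gdom Bi = [oA,oA]" | "gdom Lc = [oA,oM]" | "gdom Rc = [oM,oA]"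

fun gcod :: "gen \<Rightarrow> ob list" where
  "gcod Mu = [oA]" | "gcod Eta = [oA]" | "gcod Dl = [oA,oA]" | "gcod Ep = []"
| "gcod Sg = [oA]" | "gcod Si = [oA]" | "gcod Sm = [oA]" | "gcod (Br x y) = [y,x]"
| "gcod Bi = [oA,oA]" | "gcod Lc = [oM]" | "gcod Rc = [oM]"

type_synonym lay = "ob list \<times> gen \<times> ob list"

fun ldom :: "lay \<Rightarrow> ob list" where "ldom (p,g,q) = p @ gdom g @ q"
fun lcod :: "lay \<Rightarrow> ob list" where "lcod (p,g,q) = p @ gcod g @ q"
fun wh :: "ob list \<Rightarrow> ob list \<Rightarrow> lay \<Rightarrow> lay" where "wh l r (p,g,q) = (l@p, g, q@r)"
fun wt :: "ob list \<Rightarrow> lay list \<Rightarrow> bool" where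
  "wt a [] = True" | "wt a (L#Ls) = (ldom L = a \<and> wt (lcod L) Ls)"
fun cdl :: "ob list \<Rightarrow> lay list \<Rightarrow> ob list" where
  "cdl a [] = a" | "cdl a (L#Ls) = cdl (lcod L) Ls"
fun swpok :: "lay \<Rightarrow> lay \<Rightarrow> bool" where
  "swpok (p1,g1,q1) (p2,g2,q2) = (length p2 + length (gdom g2) \<le> length p1)"
fun swp1 :: "lay \<Rightarrow> lay \<Rightarrow> lay" where
  "swp1 (p1,g1,q1) (p2,g2,q2) = (p2, g2, drop (length p2 + length (gdom g2)) p1 @ gdom g1 @ q1)"
fun swp2 :: "lay \<Rightarrow> lay \<Rightarrow> lay" where
  "swp2 (p1,g1,q1) (p2,g2,q2) = (p2 @ gcod g2 @ drop (length p2 + length (gdom g2)) p1, g1, q1)"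
fun pass :: "lay list \<Rightarrow> lay list" where
  "pass (L1 # L2 # Ls) = (if swpok L1 L2 then swp1 L1 L2 # pass (swp2 L1 L2 # Ls)
                          else L1 # pass (L2 # Ls))"
| "pass Ls = Ls"
fun nrm :: "nat \<Rightarrow> lay list \<Rightarrow> lay list" where
  "nrm 0 X = X" | "nrm (Suc n) X = (let Y = pass X in if Y = X then X else nrm n Y)"

lemma nrm_num[simp]: "nrm (numeral k) X = (let Y = pass X in if Y = X then X else nrm (pred_numeral k) Y)"
  by (simp add: numeral_eq_Suc)

definition rw :: "ob list \<Rightarrow> nat \<Rightarrow> ob list \<Rightarrow> ob list \<Rightarrow> ob list \<Rightarrow> lay list \<Rightarrow> lay list \<Rightarrow> lay list \<Rightarrow> lay list" where
  "rw a i l r d P Q X = (if cdl a (take i X) = l @ d @ r \<and> take (length P) (drop i X) = map (wh l r) P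
      then take i X @ map (wh l r) Q @ drop (i + length P) X else X)"

fun brl :: "ob \<Rightarrow> ob list \<Rightarrow> lay list" where
  "brl x [] = []" | "brl x (d#ds) = ([], Br x d, ds) # map (wh [d] []) (brl x ds)"
fun brr :: "ob list \<Rightarrow> ob \<Rightarrow> lay list" where
  "brr [] x = []" | "brr (d#ds) x = map (wh [d] []) (brr ds x) @ [([], Br d x, ds)]"


lemma wt_append[simp]: "wt a (X @ Y) = (wt a X \<and> wt (cdl a X) Y)"
  by (induction X arbitrary: a) auto
lemma cdl_append[simp]: "cdl a (X @ Y) = cdl (cdl a X) Y"
  by (induction X arbitrary: a) auto

lemma wh_comp: "ldom (wh l r L) = l @ ldom L @ r" "lcod (wh l r L) = l @ lcod L @ r"
  by (cases L; auto)+

lemma wt_wh: "wt a P \<Longrightarrow> wt (l @ a @ r) (map (wh l r) P) \<and> cdl (l @ a @ r) (map (wh l r) P) = l @ cdl a P @ r"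
  by (induction P arbitrary: a) (auto simp: wh_comp)

locale bsm = fixes C :: "('o,'m) bmc" assumes bsm: "braided_strict_monoidal C"
begin

abbreviation cp (infixr "\<cdot>" 55) where "g \<cdot> f \<equiv> cmp C g f"
abbreviation tn (infixr "\<otimes>" 60) where "f \<otimes> g \<equiv> tar C f g"
abbreviation ii where "ii a \<equiv> idm C a"
abbreviation tb (infixr "\<oplus>" 60) where "a \<oplus> b \<equiv> tob C a b"

lemma hom_arr: "f \<in> hom C a b \<Longrightarrow> f \<in> Arr C" and hom_dm: "f \<in> hom C a b \<Longrightarrow> dm C f = a"
  and hom_cd: "f \<in> hom C a b \<Longrightarrow> cd C f = b"
  by (auto simp: hom_def)

lemma hom_obj: "f \<in> hom C a b \<Longrightarrow> a \<in> Obj C" "f \<in> hom C a b \<Longrightarrow> b \<in> Obj C"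
  using bsm unfolding braided_strict_monoidal_def hom_def by auto

lemma idm_hom: "a \<in> Obj C \<Longrightarrow> ii a \<in> hom C a a"
  using bsm unfolding braided_strict_monoidal_def by auto

lemma cmp_hom: "f \<in> hom C a b \<Longrightarrow> g \<in> hom C b c \<Longrightarrow> g \<cdot> f \<in> hom C a c"
  using bsm hom_obj unfolding braided_strict_monoidal_def by metis

lemma id_l: "f \<in> hom C a b \<Longrightarrow> ii b \<cdot> f = f"
  using bsm unfolding braided_strict_monoidal_def hom_def by auto
lemma id_r: "f \<in> hom C a b \<Longrightarrow> f \<cdot> ii a = f"
  using bsm unfolding braided_strict_monoidal_def hom_def by auto

lemma assoc: "f \<in> hom C a b \<Longrightarrow> g \<in> hom C b c \<Longrightarrow> h \<in> hom C c d \<Longrightarrow> h \<cdot> (g \<cdot> f) = (h \<cdot> g) \<cdot> f"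
  using bsm unfolding braided_strict_monoidal_def hom_def by auto

lemma un_obj: "un C \<in> Obj C"
  using bsm unfolding braided_strict_monoidal_def by auto
lemma tob_obj: "a \<in> Obj C \<Longrightarrow> b \<in> Obj C \<Longrightarrow> a \<oplus> b \<in> Obj C"
  using bsm unfolding braided_strict_monoidal_def by auto

lemma tar_hom: "f \<in> hom C a b \<Longrightarrow> g \<in> hom C c d \<Longrightarrow> f \<otimes> g \<in> hom C (a \<oplus> c) (b \<oplus> d)"
  using bsm unfolding braided_strict_monoidal_def hom_def by auto

lemma tar_id: "a \<in> Obj C \<Longrightarrow> b \<in> Obj C \<Longrightarrow> ii a \<otimes> ii b = ii (a \<oplus> b)"
  using bsm unfolding braided_strict_monoidal_def by auto

lemma inter: "f \<in> hom C a b \<Longrightarrow> f' \<in> hom C b c \<Longrightarrow> g \<in> hom C x y \<Longrightarrow> g' \<in> hom C y z \<Longrightarrow>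
   (f' \<cdot> f) \<otimes> (g' \<cdot> g) = (f' \<otimes> g') \<cdot> (f \<otimes> g)"
  using bsm unfolding braided_strict_monoidal_def hom_def by auto

lemma tob_assoc: "a \<in> Obj C \<Longrightarrow> b \<in> Obj C \<Longrightarrow> c \<in> Obj C \<Longrightarrow> (a \<oplus> b) \<oplus> c = a \<oplus> (b \<oplus> c)"
  using bsm unfolding braided_strict_monoidal_def by auto
lemma tar_assoc: "f \<in> hom C a b \<Longrightarrow> g \<in> hom C c d \<Longrightarrow> h \<in> hom C x y \<Longrightarrow> (f \<otimes> g) \<otimes> h = f \<otimes> (g \<otimes> h)"
  using bsm unfolding braided_strict_monoidal_def hom_def by auto
lemma tob_un: "a \<in> Obj C \<Longrightarrow> un C \<oplus> a = a" "a \<in> Obj C \<Longrightarrow> a \<oplus> un C = a"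
  using bsm unfolding braided_strict_monoidal_def by auto
lemma tar_un: "f \<in> hom C a b \<Longrightarrow> ii (un C) \<otimes> f = f" "f \<in> hom C a b \<Longrightarrow> f \<otimes> ii (un C) = f"
  using bsm unfolding braided_strict_monoidal_def hom_def by auto

lemma brd_iso: "a \<in> Obj C \<Longrightarrow> b \<in> Obj C \<Longrightarrow> iso_mor C (brd C a b) (a \<oplus> b) (b \<oplus> a)"
  using bsm unfolding braided_strict_monoidal_def by auto
lemma brd_hom: "a \<in> Obj C \<Longrightarrow> b \<in> Obj C \<Longrightarrow> brd C a b \<in> hom C (a \<oplus> b) (b \<oplus> a)"
  using brd_iso iso_mor_def by metis

lemma brd_nat: "f \<in> hom C a b \<Longrightarrow> g \<in> hom C c d \<Longrightarrow> (g \<otimes> f) \<cdot> brd C a c = brd C b d \<cdot> (f \<otimes> g)"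
  using bsm unfolding braided_strict_monoidal_def hom_def by auto

lemma hex1: "a \<in> Obj C \<Longrightarrow> b \<in> Obj C \<Longrightarrow> c \<in> Obj C \<Longrightarrow>
   brd C a (b \<oplus> c) = (ii b \<otimes> brd C a c) \<cdot> (brd C a b \<otimes> ii c)"
  using bsm unfolding braided_strict_monoidal_def by auto
lemma hex2: "a \<in> Obj C \<Longrightarrow> b \<in> Obj C \<Longrightarrow> c \<in> Obj C \<Longrightarrow>
   brd C (a \<oplus> b) c = (brd C a c \<otimes> ii b) \<cdot> (ii a \<otimes> brd C b c)"
  using bsm unfolding braided_strict_monoidal_def by auto

lemma brd_un: "a \<in> Obj C \<Longrightarrow> brd C a (un C) = ii a"
proof -
  assume a: "a \<in> Obj C"
  let ?b = "brd C a (un C)"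
  have h: "?b \<in> hom C a a" using brd_hom[OF a un_obj] tob_un a by simp
  have "?b = (ii (un C) \<otimes> ?b) \<cdot> (?b \<otimes> ii (un C))"
    using hex1[OF a un_obj un_obj] tob_un[OF un_obj] by simp
  also have "\<dots> = ?b \<cdot> ?b" using tar_un h by simp
  finally have e: "?b = ?b \<cdot> ?b" .
  obtain g where g: "g \<in> hom C a a" "g \<cdot> ?b = ii a"
    using brd_iso[OF a un_obj] tob_un a unfolding iso_mor_def by auto
  have "ii a = g \<cdot> (?b \<cdot> ?b)" using e g by simp
  also have "\<dots> = ?b" using assoc[OF h h g(1)] g(2) id_l[OF h] by simp
  finally show ?thesis by simp
qed

lemma brd_un2: "a \<in> Obj C \<Longrightarrow> brd C (un C) a = ii a"
proof -
  assume a: "a \<in> Obj C"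
  let ?b = "brd C (un C) a"
  have h: "?b \<in> hom C a a" using brd_hom[OF un_obj a] tob_un a by simp
  have "?b = (?b \<otimes> ii (un C)) \<cdot> (ii (un C) \<otimes> ?b)"
    using hex2[OF un_obj un_obj a] tob_un[OF un_obj] by simp
  also have "\<dots> = ?b \<cdot> ?b" using tar_un h by simp
  finally have e: "?b = ?b \<cdot> ?b" .
  obtain g where g: "g \<in> hom C a a" "g \<cdot> ?b = ii a"
    using brd_iso[OF un_obj a] tob_un a unfolding iso_mor_def by auto
  have "ii a = g \<cdot> (?b \<cdot> ?b)" using e g by simp
  also have "\<dots> = ?b" using assoc[OF h h g(1)] g(2) id_l[OF h] by simp
  finally show ?thesis by simp
qed

lemma obj_tar_hom: "a \<in> Obj C \<Longrightarrow> f \<in> hom C b c \<Longrightarrow> ii a \<otimes> f \<in> hom C (a \<oplus> b) (a \<oplus> c)"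
  by (intro tar_hom idm_hom)
lemma tar_obj_hom: "a \<in> Obj C \<Longrightarrow> f \<in> hom C b c \<Longrightarrow> f \<otimes> ii a \<in> hom C (b \<oplus> a) (c \<oplus> a)"
  by (intro tar_hom idm_hom)

lemma whisk_cmp: "P \<in> Obj C \<Longrightarrow> Q \<in> Obj C \<Longrightarrow> f \<in> hom C a b \<Longrightarrow> g \<in> hom C b c \<Longrightarrow>
  (ii P \<otimes> (g \<otimes> ii Q)) \<cdot> (ii P \<otimes> (f \<otimes> ii Q)) = ii P \<otimes> ((g \<cdot> f) \<otimes> ii Q)"
proof -
  assume h: "P \<in> Obj C" "Q \<in> Obj C" "f \<in> hom C a b" "g \<in> hom C b c"
  have "(g \<cdot> f) \<otimes> ii Q = (g \<otimes> ii Q) \<cdot> (f \<otimes> ii Q)"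
    using inter[OF h(3) h(4) idm_hom[OF h(2)] idm_hom[OF h(2)]] id_l[OF idm_hom[OF h(2)]] by simp
  moreover have "ii P \<otimes> ((g \<otimes> ii Q) \<cdot> (f \<otimes> ii Q)) = (ii P \<otimes> (g \<otimes> ii Q)) \<cdot> (ii P \<otimes> (f \<otimes> ii Q))"
    using inter[OF idm_hom[OF h(1)] idm_hom[OF h(1)] tar_obj_hom[OF h(2) h(3)] tar_obj_hom[OF h(2) h(4)]]
      id_l[OF idm_hom[OF h(1)]] by simp
  ultimately show ?thesis by simp
qed

lemma swap_core1:
  assumes P: "P \<in> Obj C" and Mm: "Mm \<in> Obj C" and Q: "Q \<in> Obj C"
    and f: "f \<in> hom C a b" and g: "g \<in> hom C c d"
  shows "(ii P \<otimes> (f \<otimes> ii (Mm \<oplus> d \<oplus> Q))) \<cdot> (ii (P \<oplus> a \<oplus> Mm) \<otimes> (g \<otimes> ii Q))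
       = ii P \<otimes> (f \<otimes> (ii Mm \<otimes> (g \<otimes> ii Q)))"
proof -
  have a: "a \<in> Obj C" "b \<in> Obj C" using f hom_obj by auto
  have c: "c \<in> Obj C" "d \<in> Obj C" using g hom_obj by auto
  have gQ: "g \<otimes> ii Q \<in> hom C (c \<oplus> Q) (d \<oplus> Q)" using tar_obj_hom[OF Q g] .
  have MgQ: "ii Mm \<otimes> (g \<otimes> ii Q) \<in> hom C (Mm \<oplus> c \<oplus> Q) (Mm \<oplus> d \<oplus> Q)"
    using obj_tar_hom[OF Mm gQ] .
  have e1: "ii (P \<oplus> a \<oplus> Mm) \<otimes> (g \<otimes> ii Q) = ii P \<otimes> (ii a \<otimes> (ii Mm \<otimes> (g \<otimes> ii Q)))"
  proof -
    have "ii (P \<oplus> a \<oplus> Mm) = ii P \<otimes> (ii a \<otimes> ii Mm)"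
      using tar_id P a Mm tob_obj by simp
    then show ?thesis
      using tar_assoc[OF idm_hom[OF P] tar_hom[OF idm_hom[OF a(1)] idm_hom[OF Mm]] gQ]
        tar_assoc[OF idm_hom[OF a(1)] idm_hom[OF Mm] gQ] by simp
  qed
  have e2: "(f \<otimes> ii (Mm \<oplus> d \<oplus> Q)) \<cdot> (ii a \<otimes> (ii Mm \<otimes> (g \<otimes> ii Q))) = f \<otimes> (ii Mm \<otimes> (g \<otimes> ii Q))"
    using inter[OF idm_hom[OF a(1)] f MgQ idm_hom[OF tob_obj[OF Mm tob_obj[OF c(2) Q]]]]
      id_l[OF MgQ] id_r[OF f] by simp
  have "(ii P \<otimes> (f \<otimes> ii (Mm \<oplus> d \<oplus> Q))) \<cdot> (ii P \<otimes> (ii a \<otimes> (ii Mm \<otimes> (g \<otimes> ii Q))))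
     = ii P \<otimes> ((f \<otimes> ii (Mm \<oplus> d \<oplus> Q)) \<cdot> (ii a \<otimes> (ii Mm \<otimes> (g \<otimes> ii Q))))"
    using inter[OF idm_hom[OF P] idm_hom[OF P] obj_tar_hom[OF a(1) MgQ]
        tar_obj_hom[OF tob_obj[OF Mm tob_obj[OF c(2) Q]] f]] id_l[OF idm_hom[OF P]] by simp
  then show ?thesis using e1 e2 by simp
qed

lemma swap_core2:
  assumes P: "P \<in> Obj C" and Mm: "Mm \<in> Obj C" and Q: "Q \<in> Obj C"
    and f: "f \<in> hom C a b" and g: "g \<in> hom C c d"
  shows "(ii (P \<oplus> b \<oplus> Mm) \<otimes> (g \<otimes> ii Q)) \<cdot> (ii P \<otimes> (f \<otimes> ii (Mm \<oplus> c \<oplus> Q)))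
       = ii P \<otimes> (f \<otimes> (ii Mm \<otimes> (g \<otimes> ii Q)))"
proof -
  have a: "a \<in> Obj C" "b \<in> Obj C" using f hom_obj by auto
  have c: "c \<in> Obj C" "d \<in> Obj C" using g hom_obj by auto
  have gQ: "g \<otimes> ii Q \<in> hom C (c \<oplus> Q) (d \<oplus> Q)" using tar_obj_hom[OF Q g] .
  have MgQ: "ii Mm \<otimes> (g \<otimes> ii Q) \<in> hom C (Mm \<oplus> c \<oplus> Q) (Mm \<oplus> d \<oplus> Q)"
    using obj_tar_hom[OF Mm gQ] .
  have e1: "ii (P \<oplus> b \<oplus> Mm) \<otimes> (g \<otimes> ii Q) = ii P \<otimes> (ii b \<otimes> (ii Mm \<otimes> (g \<otimes> ii Q)))"
  proof -
    have "ii (P \<oplus> b \<oplus> Mm) = ii P \<otimes> (ii b \<otimes> ii Mm)"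
      using tar_id P a Mm tob_obj by simp
    then show ?thesis
      using tar_assoc[OF idm_hom[OF P] tar_hom[OF idm_hom[OF a(2)] idm_hom[OF Mm]] gQ]
        tar_assoc[OF idm_hom[OF a(2)] idm_hom[OF Mm] gQ] by simp
  qed
  have e2: "(ii b \<otimes> (ii Mm \<otimes> (g \<otimes> ii Q))) \<cdot> (f \<otimes> ii (Mm \<oplus> c \<oplus> Q)) = f \<otimes> (ii Mm \<otimes> (g \<otimes> ii Q))"
    using inter[OF f idm_hom[OF a(2)] idm_hom[OF tob_obj[OF Mm tob_obj[OF c(1) Q]]] MgQ]
      id_r[OF MgQ] id_l[OF f] by simp
  have "(ii P \<otimes> (ii b \<otimes> (ii Mm \<otimes> (g \<otimes> ii Q)))) \<cdot> (ii P \<otimes> (f \<otimes> ii (Mm \<oplus> c \<oplus> Q)))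
     = ii P \<otimes> ((ii b \<otimes> (ii Mm \<otimes> (g \<otimes> ii Q))) \<cdot> (f \<otimes> ii (Mm \<oplus> c \<oplus> Q)))"
    using inter[OF idm_hom[OF P] idm_hom[OF P] tar_obj_hom[OF tob_obj[OF Mm tob_obj[OF c(1) Q]] f]
        obj_tar_hom[OF a(2) MgQ]] id_l[OF idm_hom[OF P]] by simp
  then show ?thesis using e1 e2 by simp
qed

end

locale hctx = bsm C for C :: "('o,'m) bmc" +
  fixes A M :: 'o and mu eta sigma delta eps S Sinv lact ract bi :: 'm
  assumes rib: "is_ribbon_algebra C A mu eta sigma"
  and hopf: "is_hopf_algebra C A mu eta delta eps S"
  and Sinv: "Sinv \<in> hom C A A" and SSi: "cmp C S Sinv = idm C A" and SiS: "cmp C Sinv S = idm C A"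
  and bim: "is_bimodule C A mu eta M lact ract"
  and bi: "bi \<in> hom C (tob C A A) (tob C A A)"
  and bib: "cmp C bi (brd C A A) = idm C (tob C A A)"
  and bbi: "cmp C (brd C A A) bi = idm C (tob C A A)"
begin

fun oi :: "ob \<Rightarrow> 'o" where "oi oA = A" | "oi oM = M"
fun tobs :: "ob list \<Rightarrow> 'o" where "tobs [] = un C" | "tobs (x#xs) = oi x \<oplus> tobs xs"
fun gi :: "gen \<Rightarrow> 'm" where
  "gi Mu = mu" | "gi Eta = eta" | "gi Dl = delta" | "gi Ep = eps" | "gi Sg = S" | "gi Si = Sinv"
| "gi Sm = sigma" | "gi (Br x y) = brd C (oi x) (oi y)" | "gi Bi = bi" | "gi Lc = lact" | "gi Rc = ract"
fun evL :: "lay \<Rightarrow> 'm" where "evL (p,g,q) = ii (tobs p) \<otimes> (gi g \<otimes> ii (tobs q))"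
fun ev :: "ob list \<Rightarrow> lay list \<Rightarrow> 'm" where
  "ev a [] = ii (tobs a)" | "ev a (L#Ls) = ev (lcod L) Ls \<cdot> evL L"
definition geq where "geq d P Q \<longleftrightarrow> wt d P \<and> wt d Q \<and> cdl d P = cdl d Q \<and> ev d P = ev d Q"

lemma alg: "is_algebra C A mu eta" using rib unfolding is_ribbon_algebra_def by auto
lemma A_obj: "A \<in> Obj C" using alg unfolding is_algebra_def by auto
lemma M_obj: "M \<in> Obj C" using bim unfolding is_bimodule_def by auto
lemma oi_obj: "oi x \<in> Obj C" by (cases x) (auto simp: A_obj M_obj)
lemma tobs_obj: "tobs xs \<in> Obj C" by (induction xs) (auto simp: oi_obj un_obj tob_obj)
lemma tobs_app: "tobs (xs @ ys) = tobs xs \<oplus> tobs ys"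
  by (induction xs) (auto simp: tob_un tobs_obj tob_assoc oi_obj)
lemma idm_app: "ii (tobs (xs @ ys)) = ii (tobs xs) \<otimes> ii (tobs ys)"
  by (simp add: tobs_app tar_id tobs_obj)
lemma tobs1: "tobs [x] = oi x" by (simp add: tob_un oi_obj)

lemma gi_hom: "gi g \<in> hom C (tobs (gdom g)) (tobs (gcod g))"
proof (cases g)
  case (Br x y) then show ?thesis using brd_hom[OF oi_obj oi_obj, of x y] by (simp add: tob_un oi_obj)
qed (insert alg hopf rib Sinv bim bi, auto simp: tob_un A_obj M_obj un_obj is_algebra_def
      is_hopf_algebra_def is_ribbon_algebra_def iso_mor_def is_bimodule_def)

lemma evL_hom: "evL L \<in> hom C (tobs (ldom L)) (tobs (lcod L))"
  by (cases L) (auto simp: tobs_app intro!: tar_hom idm_hom tobs_obj gi_hom)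

lemma ev_hom: "wt a Ls \<Longrightarrow> ev a Ls \<in> hom C (tobs a) (tobs (cdl a Ls))"
proof (induction Ls arbitrary: a)
  case Nil then show ?case by (simp add: idm_hom tobs_obj)
next
  case (Cons L Ls) then show ?case using evL_hom[of L] by (auto intro: cmp_hom)
qed

lemma ev_app: "wt a X \<Longrightarrow> wt (cdl a X) Y \<Longrightarrow> ev a (X @ Y) = ev (cdl a X) Y \<cdot> ev a X"
proof (induction X arbitrary: a)
  case Nil then show ?case using ev_hom[of a Y] id_r by simp
next
  case (Cons L X)
  have w: "wt (lcod L) X" "wt (cdl (lcod L) X) Y" "ldom L = a" using Cons.prems by auto
  have "ev a ((L # X) @ Y) = ev (lcod L) (X @ Y) \<cdot> evL L" by simp
  also have "\<dots> = (ev (cdl (lcod L) X) Y \<cdot> ev (lcod L) X) \<cdot> evL L" using Cons.IH[OF w(1,2)] by simp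
  also have "\<dots> = ev (cdl (lcod L) X) Y \<cdot> (ev (lcod L) X \<cdot> evL L)"
    using assoc[OF evL_hom[of L] ev_hom[OF w(1)] ev_hom[OF w(2)]] by simp
  finally show ?case by simp
qed

lemma evL_wh: "evL (wh l r L) = ii (tobs l) \<otimes> (evL L \<otimes> ii (tobs r))"
proof (cases L)
  case (fields p g q)
  have g: "gi g \<in> hom C (tobs (gdom g)) (tobs (gcod g))" by (rule gi_hom)
  have i: "\<And>x. ii (tobs x) \<in> hom C (tobs x) (tobs x)" by (simp add: idm_hom tobs_obj)
  have "evL (wh l r L) = (ii (tobs l) \<otimes> ii (tobs p)) \<otimes> (gi g \<otimes> (ii (tobs q) \<otimes> ii (tobs r)))"
    using fields by (simp add: idm_app)
  also have "\<dots> = ii (tobs l) \<otimes> (ii (tobs p) \<otimes> (gi g \<otimes> (ii (tobs q) \<otimes> ii (tobs r))))"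
    by (rule tar_assoc[OF i i tar_hom[OF g tar_hom[OF i i]]])
  also have "\<dots> = ii (tobs l) \<otimes> ((ii (tobs p) \<otimes> (gi g \<otimes> ii (tobs q))) \<otimes> ii (tobs r))"
    using tar_assoc[OF g i i] tar_assoc[OF i tar_hom[OF g i] i] by simp
  finally show ?thesis using fields by simp
qed

lemma ev_wh: "wt a P \<Longrightarrow> ev (l @ a @ r) (map (wh l r) P) = ii (tobs l) \<otimes> (ev a P \<otimes> ii (tobs r))"
proof (induction P arbitrary: a)
  case Nil then show ?case by (simp add: idm_app)
next
  case (Cons L P)
  have wl: "wt (lcod L) P" and dl: "ldom L = a" using Cons.prems by auto
  have "ev (l @ a @ r) (map (wh l r) (L # P)) = ev (l @ lcod L @ r) (map (wh l r) P) \<cdot> evL (wh l r L)"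
    by (simp add: wh_comp)
  also have "\<dots> = (ii (tobs l) \<otimes> (ev (lcod L) P \<otimes> ii (tobs r))) \<cdot> (ii (tobs l) \<otimes> (evL L \<otimes> ii (tobs r)))"
    using Cons.IH[OF wl] evL_wh by simp
  also have "\<dots> = ii (tobs l) \<otimes> ((ev (lcod L) P \<cdot> evL L) \<otimes> ii (tobs r))"
    by (rule whisk_cmp[OF tobs_obj tobs_obj evL_hom ev_hom[OF wl]])
  finally show ?case by simp
qed

lemma cong: "wt a (X @ P @ Y) \<Longrightarrow> wt (cdl a X) Q \<Longrightarrow> cdl (cdl a X) Q = cdl (cdl a X) P \<Longrightarrow>
   ev (cdl a X) Q = ev (cdl a X) P \<Longrightarrow> wt a (X @ Q @ Y) \<and> ev a (X @ Q @ Y) = ev a (X @ P @ Y)"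
  by (simp add: ev_app)

lemma rw_ok: "geq d P Q \<Longrightarrow> wt a X \<Longrightarrow> wt a (rw a i l r d P Q X) \<and> ev a (rw a i l r d P Q X) = ev a X"
proof (cases "cdl a (take i X) = l @ d @ r \<and> take (length P) (drop i X) = map (wh l r) P")
  case True
  assume g: "geq d P Q" and w: "wt a X"
  have X: "X = take i X @ map (wh l r) P @ drop (i + length P) X"
    using True by (metis append_take_drop_id drop_drop add.commute)
  have wP: "wt d P" and wQ: "wt d Q" and cc: "cdl d P = cdl d Q" and ee: "ev d P = ev d Q"
    using g unfolding geq_def by auto
  have "wt a (take i X @ map (wh l r) Q @ drop (i + length P) X) \<and>
        ev a (take i X @ map (wh l r) Q @ drop (i + length P) X) = ev a (take i X @ map (wh l r) P @ drop (i + length P) X)"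
    apply (rule cong)
    using w X True wt_wh[OF wP, of l r] wt_wh[OF wQ, of l r] cc ee ev_wh[OF wP] ev_wh[OF wQ]
    by (metis, auto)
  moreover have "rw a i l r d P Q X = take i X @ map (wh l r) Q @ drop (i + length P) X"
    using True by (simp add: rw_def)
  moreover have "ev a X = ev a (take i X @ map (wh l r) P @ drop (i + length P) X)"
    using X by (rule arg_cong)
  ultimately show ?thesis by simp
qed (auto simp: rw_def)

lemma swap_ok: "wt a [L1, L2] \<Longrightarrow> swpok L1 L2 \<Longrightarrow>
   wt a [swp1 L1 L2, swp2 L1 L2] \<and> cdl a [swp1 L1 L2, swp2 L1 L2] = cdl a [L1, L2] \<and>
   ev a [swp1 L1 L2, swp2 L1 L2] = ev a [L1, L2]"
proof -
  obtain p1 g1 q1 where L1: "L1 = (p1,g1,q1)" by (cases L1)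
  obtain p2 g2 q2 where L2: "L2 = (p2,g2,q2)" by (cases L2)
  assume w: "wt a [L1, L2]" and s: "swpok L1 L2"
  let ?k = "length p2 + length (gdom g2)"
  let ?m = "drop ?k p1"
  have a: "a = p1 @ gdom g1 @ q1" and e: "p1 @ gcod g1 @ q1 = p2 @ gdom g2 @ q2"
    using w L1 L2 by auto
  have k: "?k \<le> length p1" using s L1 L2 by simp
  have "take ?k (p1 @ gcod g1 @ q1) = take ?k (p2 @ gdom g2 @ q2)" using e by simp
  hence tp: "take ?k p1 = p2 @ gdom g2" using k by simp
  have p1: "p1 = p2 @ gdom g2 @ ?m" using tp by (metis append.assoc append_take_drop_id)
  have "drop ?k (p1 @ gcod g1 @ q1) = drop ?k (p2 @ gdom g2 @ q2)" using e by simp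
  hence q2: "q2 = ?m @ gcod g1 @ q1" using k by simp
  define m where "m = ?m"
  have p1': "p1 = p2 @ gdom g2 @ m" and q2': "q2 = m @ gcod g1 @ q1" using p1 q2 m_def by auto
  have S1: "swp1 L1 L2 = (p2, g2, m @ gdom g1 @ q1)" using L1 L2 m_def by simp
  have S2: "swp2 L1 L2 = (p2 @ gcod g2 @ m, g1, q1)" using L1 L2 m_def by simp
  have i: "\<And>x. ii (tobs x) \<in> hom C (tobs x) (tobs x)" by (simp add: idm_hom tobs_obj)
  have ev1: "ev a [L1, L2] = evL L2 \<cdot> evL L1"
    using L1 L2 e id_l[OF evL_hom[of L2]] by simp
  have ev2: "ev a [swp1 L1 L2, swp2 L1 L2] = evL (swp2 L1 L2) \<cdot> evL (swp1 L1 L2)"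
    using id_l[OF evL_hom[of "swp2 L1 L2"]] S1 S2 by simp
  have "evL L2 \<cdot> evL L1 = ii (tobs p2) \<otimes> (gi g2 \<otimes> (ii (tobs m) \<otimes> (gi g1 \<otimes> ii (tobs q1))))"
    using swap_core1[OF tobs_obj[of p2] tobs_obj[of m] tobs_obj[of q1] gi_hom[of g2] gi_hom[of g1]]
    by (simp add: L1 L2 p1' q2' tobs_app)
  moreover have "evL (swp2 L1 L2) \<cdot> evL (swp1 L1 L2) = ii (tobs p2) \<otimes> (gi g2 \<otimes> (ii (tobs m) \<otimes> (gi g1 \<otimes> ii (tobs q1))))"
    using swap_core2[OF tobs_obj[of p2] tobs_obj[of m] tobs_obj[of q1] gi_hom[of g2] gi_hom[of g1]]
    by (simp add: S1 S2 tobs_app)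
  ultimately show ?thesis using ev1 ev2 S1 S2 L1 L2 a p1' q2' by simp
qed

lemma pass_ok: "wt a X \<Longrightarrow> wt a (pass X) \<and> cdl a (pass X) = cdl a X \<and> ev a (pass X) = ev a X"
proof (induction X arbitrary: a rule: pass.induct)
  case (1 L1 L2 Ls)
  show ?case
  proof (cases "swpok L1 L2")
    case True
    let ?s1 = "swp1 L1 L2" and ?s2 = "swp2 L1 L2"
    have w12: "wt a [L1, L2]" using "1.prems" by simp
    note sw = swap_ok[OF w12 True]
    have c: "lcod ?s2 = lcod L2" using sw by simp
    have wr: "wt (lcod ?s1) (?s2 # Ls)" using sw c "1.prems" by simp
    note IH = "1.IH"(1)[OF True wr]
    have w2: "wt (cdl a [L1,L2]) Ls" using "1.prems" by simp
    have "ev a (pass (L1#L2#Ls)) = ev (lcod ?s1) (pass (?s2 # Ls)) \<cdot> evL ?s1" using True by simp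
    also have "\<dots> = ev (lcod ?s1) (?s2 # Ls) \<cdot> evL ?s1" using IH by simp
    also have "\<dots> = ev a ([?s1, ?s2] @ Ls)" by simp
    also have "\<dots> = ev (cdl a [?s1,?s2]) Ls \<cdot> ev a [?s1,?s2]" 
      by (rule ev_app) (use sw w2 in auto)
    also have "\<dots> = ev (cdl a [L1,L2]) Ls \<cdot> ev a [L1,L2]"
    proof -
      have e1: "ev a [?s1,?s2] = ev a [L1,L2]" and e2: "cdl a [?s1,?s2] = cdl a [L1,L2]" using sw by blast+
      show ?thesis by (simp only: e1 e2)
    qed
    also have "\<dots> = ev a ([L1,L2] @ Ls)" by (rule ev_app[symmetric]) (use w12 w2 in auto)
    finally have E: "ev a (pass (L1#L2#Ls)) = ev a (L1#L2#Ls)" by simp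
    have W: "wt a (pass (L1#L2#Ls)) \<and> cdl a (pass (L1#L2#Ls)) = cdl a (L1#L2#Ls)"
      using True IH sw "1.prems" c by auto
    show ?thesis using E W by simp
  next
    case False
    have wr: "wt (lcod L1) (L2 # Ls)" using "1.prems" by simp
    note IH = "1.IH"(2)[OF False wr]
    then show ?thesis using False "1.prems" by simp
  qed
qed auto

lemma nrm_ok: "wt a X \<Longrightarrow> wt a (nrm n X) \<and> ev a (nrm n X) = ev a X"
proof (induction n arbitrary: X)
  case (Suc n) then show ?case using pass_ok[of a X] by (auto simp: Let_def)
qed simp

lemma stepI: "wt a X \<Longrightarrow> wt a Y \<Longrightarrow> nrm n X = nrm n Y \<Longrightarrow> ev a X = ev a Y"
  using nrm_ok by metis

lemma step: "geq d P Q \<Longrightarrow> wt a X \<Longrightarrow> wt a Y \<Longrightarrow> nrm n X = nrm n Y \<Longrightarrow> ev a X = ev a (rw a i l r d P Q Y)"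
  using stepI rw_ok by metis

lemma geq_sym: "geq d P Q \<Longrightarrow> geq d Q P" unfolding geq_def by auto

end

context hctx begin

declare A_obj[simp] M_obj[simp] oi_obj[simp] tobs_obj[simp] un_obj[simp] tob_obj[simp]

lemma tob_un_s[simp]: "a \<in> Obj C \<Longrightarrow> a \<oplus> un C = a" "a \<in> Obj C \<Longrightarrow> un C \<oplus> a = a"
  using tob_un by auto

lemma ev1[simp]: "ev a [L] = evL L" using id_l[OF evL_hom[of L]] by simp

lemma brl_ok: "wt (x#ds) (brl x ds) \<and> cdl (x#ds) (brl x ds) = ds @ [x] \<and> ev (x#ds) (brl x ds) = brd C (oi x) (tobs ds)"
proof (induction ds)
  case Nil then show ?case by (simp add: brd_un)
next
  case (Cons d ds)
  have w: "wt (x#ds) (brl x ds)" and c: "cdl (x#ds) (brl x ds) = ds @ [x]"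
    and e: "ev (x#ds) (brl x ds) = brd C (oi x) (tobs ds)" using Cons by auto
  have ww: "wt (d#x#ds) (map (wh [d] []) (brl x ds)) \<and> cdl (d#x#ds) (map (wh [d] []) (brl x ds)) = d # ds @ [x]"
    using wt_wh[OF w, of "[d]" "[]"] c by simp
  have ew: "ev (d#x#ds) (map (wh [d] []) (brl x ds)) = ii (oi d) \<otimes> brd C (oi x) (tobs ds)"
    using ev_wh[OF w, of "[d]" "[]"] e tar_un(2)[OF brd_hom[OF oi_obj tobs_obj]] by simp
  have "ev (x#d#ds) (brl x (d#ds)) = (ii (oi d) \<otimes> brd C (oi x) (tobs ds)) \<cdot> (brd C (oi x) (oi d) \<otimes> ii (tobs ds))"
    using ew tar_un(1)[OF tar_obj_hom[OF tobs_obj brd_hom[OF oi_obj oi_obj]]] by simp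
  also have "\<dots> = brd C (oi x) (tobs (d#ds))" using hex1[OF oi_obj oi_obj tobs_obj] by simp
  finally show ?case using ww by simp
qed

lemma brr_ok: "wt (ds @ [x]) (brr ds x) \<and> cdl (ds @ [x]) (brr ds x) = x # ds \<and> ev (ds @ [x]) (brr ds x) = brd C (tobs ds) (oi x)"
proof (induction ds)
  case Nil then show ?case by (simp add: brd_un2)
next
  case (Cons d ds)
  have w: "wt (ds@[x]) (brr ds x)" and c: "cdl (ds@[x]) (brr ds x) = x # ds"
    and e: "ev (ds@[x]) (brr ds x) = brd C (tobs ds) (oi x)" using Cons by auto
  have ww: "wt (d#ds@[x]) (map (wh [d] []) (brr ds x)) \<and> cdl (d#ds@[x]) (map (wh [d] []) (brr ds x)) = d # x # ds"
    using wt_wh[OF w, of "[d]" "[]"] c by simp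
  have ew: "ev (d#ds@[x]) (map (wh [d] []) (brr ds x)) = ii (oi d) \<otimes> brd C (tobs ds) (oi x)"
    using ev_wh[OF w, of "[d]" "[]"] e tar_un(2)[OF brd_hom[OF tobs_obj oi_obj]] by simp
  have "ev ((d#ds) @ [x]) (brr (d#ds) x) = ev (d#x#ds) [([], Br d x, ds)] \<cdot> ev (d#ds@[x]) (map (wh [d] []) (brr ds x))"
    using ev_app ww by simp
  also have "\<dots> = (brd C (oi d) (oi x) \<otimes> ii (tobs ds)) \<cdot> (ii (oi d) \<otimes> brd C (tobs ds) (oi x))"
    using ew tar_un(1)[OF tar_obj_hom[OF tobs_obj brd_hom[OF oi_obj oi_obj]]] 
     id_l[OF tar_obj_hom[OF tobs_obj[of ds] brd_hom[OF oi_obj[of d] oi_obj[of x]]]] by (simp add: tob_assoc)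
  also have "\<dots> = brd C (tobs (d#ds)) (oi x)" using hex2[OF oi_obj tobs_obj oi_obj] by simp
  finally show ?case using ww by simp
qed

lemma natl: "wt d P \<Longrightarrow> geq (x#d) (brl x d @ map (wh [] [x]) P) (map (wh [x] []) P @ brl x (cdl d P))"
proof -
  assume w: "wt d P"
  note b1 = brl_ok[of x d] and b2 = brl_ok[of x "cdl d P"]
  note w1 = wt_wh[OF w, of "[]" "[x]"] and w2 = wt_wh[OF w, of "[x]" "[]"]
  note e1 = ev_wh[OF w, of "[]" "[x]"] and e2 = ev_wh[OF w, of "[x]" "[]"]
  have h: "ev d P \<in> hom C (tobs d) (tobs (cdl d P))" by (rule ev_hom[OF w])
  have L: "ev (x#d) (brl x d @ map (wh [] [x]) P) = (ev d P \<otimes> ii (oi x)) \<cdot> brd C (oi x) (tobs d)"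
    using ev_app[of "x#d" "brl x d" "map (wh [] [x]) P"] b1 w1 e1 tar_un(1)[OF tar_obj_hom[OF oi_obj h]] by simp
  have R: "ev (x#d) (map (wh [x] []) P @ brl x (cdl d P)) = brd C (oi x) (tobs (cdl d P)) \<cdot> (ii (oi x) \<otimes> ev d P)"
    using ev_app[of "x#d" "map (wh [x] []) P" "brl x (cdl d P)"] b2 w2 e2 tar_un(2)[OF h] by simp
  show ?thesis unfolding geq_def using L R brd_nat[OF idm_hom[OF oi_obj] h] b1 b2 w1 w2 by simp
qed

lemma natr: "wt d P \<Longrightarrow> geq (d@[x]) (brr d x @ map (wh [x] []) P) (map (wh [] [x]) P @ brr (cdl d P) x)"
proof -
  assume w: "wt d P"
  note b1 = brr_ok[of d x] and b2 = brr_ok[of "cdl d P" x]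
  note w1 = wt_wh[OF w, of "[]" "[x]"] and w2 = wt_wh[OF w, of "[x]" "[]"]
  note e1 = ev_wh[OF w, of "[]" "[x]"] and e2 = ev_wh[OF w, of "[x]" "[]"]
  have h: "ev d P \<in> hom C (tobs d) (tobs (cdl d P))" by (rule ev_hom[OF w])
  have L: "ev (d@[x]) (brr d x @ map (wh [x] []) P) = (ii (oi x) \<otimes> ev d P) \<cdot> brd C (tobs d) (oi x)"
    using ev_app[of "d@[x]" "brr d x" "map (wh [x] []) P"] b1 w2 e2 tar_un(2)[OF h] by simp
  have R: "ev (d@[x]) (map (wh [] [x]) P @ brr (cdl d P) x) = brd C (tobs (cdl d P)) (oi x) \<cdot> (ev d P \<otimes> ii (oi x))"
    using ev_app[of "d@[x]" "map (wh [] [x]) P" "brr (cdl d P) x"] b2 w1 e1 tar_un(1)[OF tar_obj_hom[OF oi_obj h]] by simp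
  show ?thesis unfolding geq_def using L R brd_nat[OF h idm_hom[OF oi_obj]] b1 b2 w1 w2 by simp
qed

end

context hctx begin

lemma evL_s1[simp]: "evL ([],g,[]) = gi g"
  using tar_un[OF gi_hom[of g]] by (simp only: evL.simps tobs.simps(1))
lemma evL_s2[simp]: "evL ([],g,x#q) = gi g \<otimes> ii (tobs (x#q))"
  using tar_un(1)[OF tar_obj_hom[OF tobs_obj[of "x#q"] gi_hom[of g]]] by (simp only: evL.simps tobs.simps(1))
lemma evL_s3[simp]: "evL (x#p,g,[]) = ii (tobs (x#p)) \<otimes> gi g"
  using tar_un(2)[OF gi_hom[of g]] by (simp only: evL.simps tobs.simps(1))

lemma ev_cons2[simp]: "ev a (L1#L2#Ls) = ev (lcod L1) (L2#Ls) \<cdot> evL L1" by simp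
declare evL.simps[simp del] ev.simps(2)[simp del]

lemma mu_hom: "mu \<in> hom C (A \<oplus> A) A" and eta_hom: "eta \<in> hom C (un C) A"
  and m_assoc: "mu \<cdot> (mu \<otimes> ii A) = mu \<cdot> (ii A \<otimes> mu)"
  and m_unl: "mu \<cdot> (eta \<otimes> ii A) = ii A" and m_unr: "mu \<cdot> (ii A \<otimes> eta) = ii A"
  using alg unfolding is_algebra_def by auto

lemma dl_hom: "delta \<in> hom C A (A \<oplus> A)" and ep_hom: "eps \<in> hom C A (un C)" and S_hom: "S \<in> hom C A A"
  and d_coassoc: "(delta \<otimes> ii A) \<cdot> delta = (ii A \<otimes> delta) \<cdot> delta"
  and d_counl: "(eps \<otimes> ii A) \<cdot> delta = ii A" and d_counr: "(ii A \<otimes> eps) \<cdot> delta = ii A"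
  and bialg: "delta \<cdot> mu = (mu \<otimes> mu) \<cdot> ((ii A \<otimes> (brd C A A \<otimes> ii A)) \<cdot> (delta \<otimes> delta))"
  and epmu: "eps \<cdot> mu = eps \<otimes> eps"
  and antL: "mu \<cdot> ((S \<otimes> ii A) \<cdot> delta) = eta \<cdot> eps"
  and antR: "mu \<cdot> ((ii A \<otimes> S) \<cdot> delta) = eta \<cdot> eps"
  using hopf unfolding is_hopf_algebra_def by auto

lemma sig_hom: "sigma \<in> hom C A A"
  and sigmu: "sigma \<cdot> mu = mu \<cdot> ((sigma \<otimes> sigma) \<cdot> (brd C A A \<cdot> brd C A A))"
  using rib unfolding is_ribbon_algebra_def iso_mor_def by auto

lemma lact_hom: "lact \<in> hom C (A \<oplus> M) M" and ract_hom: "ract \<in> hom C (M \<oplus> A) M"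
  and l_assoc: "lact \<cdot> (mu \<otimes> ii M) = lact \<cdot> (ii A \<otimes> lact)"
  and r_assoc: "ract \<cdot> (ract \<otimes> ii A) = ract \<cdot> (ii M \<otimes> mu)"
  and lr: "lact \<cdot> (ii A \<otimes> ract) = ract \<cdot> (lact \<otimes> ii A)"
  using bim unfolding is_bimodule_def by auto

lemma brAA_hom: "brd C A A \<in> hom C (A \<oplus> A) (A \<oplus> A)" using brd_hom by simp

lemma iA: "ii A \<in> hom C A A" and iM: "ii M \<in> hom C M M" using idm_hom by auto

abbreviation "aA \<equiv> oA"

lemma ax_assoc: "geq [oA,oA,oA] [([],Mu,[oA]),([],Mu,[])] [([oA],Mu,[]),([],Mu,[])]"
  unfolding geq_def using m_assoc by simp

lemma ax_unl: "geq [oA] [([],Eta,[oA]),([],Mu,[])] []"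
  unfolding geq_def using m_unl by simp
lemma ax_unr: "geq [oA] [([oA],Eta,[]),([],Mu,[])] []"
  unfolding geq_def using m_unr by simp

lemma ax_coassoc: "geq [oA] [([],Dl,[]),([],Dl,[oA])] [([],Dl,[]),([oA],Dl,[])]"
  unfolding geq_def using d_coassoc by simp
lemma ax_counl: "geq [oA] [([],Dl,[]),([],Ep,[oA])] []"
  unfolding geq_def using d_counl by simp
lemma ax_counr: "geq [oA] [([],Dl,[]),([oA],Ep,[])] []"
  unfolding geq_def using d_counr by simp

lemma ax_epmu: "geq [oA,oA] [([],Mu,[]),([],Ep,[])] [([],Ep,[oA]),([],Ep,[])]"
proof -
  have "eps \<otimes> eps = (ii (un C) \<cdot> eps) \<otimes> (eps \<cdot> ii A)" using id_l[OF ep_hom] id_r[OF ep_hom] by simp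
  also have "\<dots> = (ii (un C) \<otimes> eps) \<cdot> (eps \<otimes> ii A)" by (rule inter[OF ep_hom idm_hom iA ep_hom]) simp
  also have "\<dots> = eps \<cdot> (eps \<otimes> ii A)" using tar_un(1)[OF ep_hom] by simp
  finally show ?thesis unfolding geq_def using epmu by simp
qed

lemma ax_antL: "geq [oA] [([],Dl,[]),([],Sg,[oA]),([],Mu,[])] [([],Ep,[]),([],Eta,[])]"
  unfolding geq_def using antL assoc[OF dl_hom tar_obj_hom[OF A_obj S_hom] mu_hom] by simp
lemma ax_antR: "geq [oA] [([],Dl,[]),([oA],Sg,[]),([],Mu,[])] [([],Ep,[]),([],Eta,[])]"
  unfolding geq_def using antR assoc[OF dl_hom obj_tar_hom[OF A_obj S_hom] mu_hom] by simp

lemma ax_SSi: "geq [oA] [([],Sg,[]),([],Si,[])] []" unfolding geq_def using SiS by simp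
lemma ax_SiS: "geq [oA] [([],Si,[]),([],Sg,[])] []" unfolding geq_def using SSi by simp
lemma ax_bib: "geq [oA,oA] [([],Br oA oA,[]),([],Bi,[])] []" unfolding geq_def using bib by simp

lemma ax_lassoc: "geq [oA,oA,oM] [([],Mu,[oM]),([],Lc,[])] [([oA],Lc,[]),([],Lc,[])]"
  unfolding geq_def using l_assoc by simp
lemma ax_rassoc: "geq [oM,oA,oA] [([],Rc,[oA]),([],Rc,[])] [([oM],Mu,[]),([],Rc,[])]"
  unfolding geq_def using r_assoc by simp
lemma ax_bimod: "geq [oA,oM,oA] [([oA],Rc,[]),([],Lc,[])] [([],Lc,[oA]),([],Rc,[])]"
  unfolding geq_def using lr by simp

lemma ax_sigmu: "geq [oA,oA] [([],Mu,[]),([],Sm,[])]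
    [([],Br oA oA,[]),([],Br oA oA,[]),([],Sm,[oA]),([oA],Sm,[]),([],Mu,[])]"
proof -
  have ss: "sigma \<otimes> sigma = (ii A \<otimes> sigma) \<cdot> (sigma \<otimes> ii A)"
    using inter[OF sig_hom iA iA sig_hom] id_l[OF sig_hom] id_r[OF sig_hom] by simp
  have h1: "sigma \<otimes> ii A \<in> hom C (A \<oplus> A) (A \<oplus> A)" using tar_obj_hom[OF A_obj sig_hom] .
  have h2: "ii A \<otimes> sigma \<in> hom C (A \<oplus> A) (A \<oplus> A)" using obj_tar_hom[OF A_obj sig_hom] .
  have hx: "(ii A \<otimes> sigma) \<cdot> (sigma \<otimes> ii A) \<in> hom C (A \<oplus> A) (A \<oplus> A)" using cmp_hom[OF h1 h2] .
  have "mu \<cdot> ((sigma \<otimes> sigma) \<cdot> (brd C A A \<cdot> brd C A A))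
      = mu \<cdot> ((((ii A \<otimes> sigma) \<cdot> (sigma \<otimes> ii A)) \<cdot> brd C A A) \<cdot> brd C A A)"
    unfolding ss using assoc[OF brAA_hom brAA_hom hx] by simp
  also have "\<dots> = (mu \<cdot> (((ii A \<otimes> sigma) \<cdot> (sigma \<otimes> ii A)) \<cdot> brd C A A)) \<cdot> brd C A A"
    by (rule assoc[OF brAA_hom cmp_hom[OF brAA_hom hx] mu_hom])
  also have "mu \<cdot> (((ii A \<otimes> sigma) \<cdot> (sigma \<otimes> ii A)) \<cdot> brd C A A) = (mu \<cdot> ((ii A \<otimes> sigma) \<cdot> (sigma \<otimes> ii A))) \<cdot> brd C A A"
    by (rule assoc[OF brAA_hom hx mu_hom])
  also have "mu \<cdot> ((ii A \<otimes> sigma) \<cdot> (sigma \<otimes> ii A)) = (mu \<cdot> (ii A \<otimes> sigma)) \<cdot> (sigma \<otimes> ii A)"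
    by (rule assoc[OF h1 h2 mu_hom])
  finally have "mu \<cdot> ((sigma \<otimes> sigma) \<cdot> (brd C A A \<cdot> brd C A A))
      = (((mu \<cdot> (ii A \<otimes> sigma)) \<cdot> (sigma \<otimes> ii A)) \<cdot> brd C A A) \<cdot> brd C A A" .
  then show ?thesis unfolding geq_def using sigmu by simp
qed

end

context hctx begin

lemma stp: "geq d P Q \<Longrightarrow> wt a X \<Longrightarrow> wt a Y \<Longrightarrow> nrm 100 X = nrm 100 Y \<Longrightarrow> rw a i l r d P Q Y = Z \<Longrightarrow> ev a X = ev a Z"
  using step by metis
lemma stpI: "wt a X \<Longrightarrow> wt a Y \<Longrightarrow> nrm 100 X = nrm 100 Y \<Longrightarrow> ev a X = ev a Y"
  using stepI by metis

lemma evL_s4[simp]: "evL (x#p,g,y#q) = ii (tobs (x#p)) \<otimes> (gi g \<otimes> ii (tobs (y#q)))"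
  by (simp only: evL.simps)

lemma ax_bbi: "geq [oA,oA] [([],Bi,[]),([],Br oA oA,[])] []" unfolding geq_def using bbi by simp

lemma ax_bialg: "geq [oA,oA] [([],Mu,[]),([],Dl,[])]
   [([],Dl,[oA]),([oA,oA],Dl,[]),([oA],Br oA oA,[oA]),([],Mu,[oA,oA]),([oA],Mu,[])]"
proof -
  have iAA: "ii (A \<oplus> A) \<in> hom C (A \<oplus> A) (A \<oplus> A)" by (simp add: idm_hom)
  have M1: "mu \<otimes> ii (A \<oplus> A) \<in> hom C (A \<oplus> A \<oplus> A \<oplus> A) (A \<oplus> A \<oplus> A)"
    using tar_obj_hom[OF tob_obj[OF A_obj A_obj] mu_hom] by (simp add: tob_assoc)
  have M2: "ii A \<otimes> mu \<in> hom C (A \<oplus> A \<oplus> A) (A \<oplus> A)"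
    using obj_tar_hom[OF A_obj mu_hom] by (simp add: tob_assoc)
  have D1: "delta \<otimes> ii A \<in> hom C (A \<oplus> A) (A \<oplus> A \<oplus> A)"
    using tar_obj_hom[OF A_obj dl_hom] by (simp add: tob_assoc)
  have D2: "ii (A \<oplus> A) \<otimes> delta \<in> hom C (A \<oplus> A \<oplus> A) (A \<oplus> A \<oplus> A \<oplus> A)"
    using obj_tar_hom[OF tob_obj[OF A_obj A_obj] dl_hom] by (simp add: tob_assoc)
  have B: "ii A \<otimes> (brd C A A \<otimes> ii A) \<in> hom C (A \<oplus> A \<oplus> A \<oplus> A) (A \<oplus> A \<oplus> A \<oplus> A)"
    using obj_tar_hom[OF A_obj tar_obj_hom[OF A_obj brAA_hom]] by (simp add: tob_assoc)
  have mm: "mu \<otimes> mu = (ii A \<otimes> mu) \<cdot> (mu \<otimes> ii (A \<oplus> A))"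
    using inter[OF mu_hom iA iAA mu_hom] id_l[OF mu_hom] id_r[OF mu_hom] by simp
  have dd: "delta \<otimes> delta = (ii (A \<oplus> A) \<otimes> delta) \<cdot> (delta \<otimes> ii A)"
    using inter[OF dl_hom iAA iA dl_hom] id_l[OF dl_hom] id_r[OF dl_hom] by simp
  have "delta \<cdot> mu = ((ii A \<otimes> mu) \<cdot> (mu \<otimes> ii (A \<oplus> A))) \<cdot> ((ii A \<otimes> (brd C A A \<otimes> ii A)) \<cdot> ((ii (A \<oplus> A) \<otimes> delta) \<cdot> (delta \<otimes> ii A)))"
    using bialg mm dd by simp
  also have "\<dots> = ((ii A \<otimes> mu) \<cdot> (mu \<otimes> ii (A \<oplus> A))) \<cdot> (((ii A \<otimes> (brd C A A \<otimes> ii A)) \<cdot> (ii (A \<oplus> A) \<otimes> delta)) \<cdot> (delta \<otimes> ii A))"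
    using assoc[OF D1 D2 B] by simp
  also have "\<dots> = (((ii A \<otimes> mu) \<cdot> (mu \<otimes> ii (A \<oplus> A))) \<cdot> ((ii A \<otimes> (brd C A A \<otimes> ii A)) \<cdot> (ii (A \<oplus> A) \<otimes> delta))) \<cdot> (delta \<otimes> ii A)"
    by (rule assoc[OF D1 cmp_hom[OF D2 B] cmp_hom[OF M1 M2]])
  also have "((ii A \<otimes> mu) \<cdot> (mu \<otimes> ii (A \<oplus> A))) \<cdot> ((ii A \<otimes> (brd C A A \<otimes> ii A)) \<cdot> (ii (A \<oplus> A) \<otimes> delta))
      = (((ii A \<otimes> mu) \<cdot> (mu \<otimes> ii (A \<oplus> A))) \<cdot> (ii A \<otimes> (brd C A A \<otimes> ii A))) \<cdot> (ii (A \<oplus> A) \<otimes> delta)"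
    by (rule assoc[OF D2 B cmp_hom[OF M1 M2]])
  finally have E: "delta \<cdot> mu = ((((ii A \<otimes> mu) \<cdot> (mu \<otimes> ii (A \<oplus> A))) \<cdot> (ii A \<otimes> (brd C A A \<otimes> ii A))) \<cdot> (ii (A \<oplus> A) \<otimes> delta)) \<cdot> (delta \<otimes> ii A)" .
  show ?thesis unfolding geq_def using E by simp
qed

lemma conv_fe: "geq [oA,oA] [([],Dl,[oA]), ([oA,oA],Dl,[]), ([oA],(Br oA oA),[oA]), ([],Mu,[oA,oA]), ([],Sg,[oA,oA]), ([oA],Ep,[oA]), ([oA],Ep,[]), ([oA],Eta,[]), ([],Mu,[])] [([],Mu,[]), ([],Sg,[])]"
proof -
  have "ev [oA,oA] [([],Dl,[oA]), ([oA,oA],Dl,[]), ([oA],(Br oA oA),[oA]), ([],Mu,[oA,oA]), ([],Sg,[oA,oA]), ([oA],Ep,[oA]), ([oA],Ep,[]), ([oA],Eta,[]), ([],Mu,[])] = ev [oA,oA] [([],Dl,[oA]), ([oA,oA],Dl,[]), ([oA],(Br oA oA),[oA]), ([],Mu,[oA,oA]), ([],Sg,[oA,oA]), ([oA],Ep,[oA]), ([oA],Ep,[])]"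
    by (rule stp[OF ax_unr, where i=7 and l="[]" and r="[]" and Y="[([],Dl,[oA]), ([oA,oA],Dl,[]), ([oA],(Br oA oA),[oA]), ([],Mu,[oA,oA]), ([],Sg,[oA,oA]), ([oA],Ep,[oA]), ([oA],Ep,[]), ([oA],Eta,[]), ([],Mu,[])]"]) (simp_all add: rw_def)
  also have "\<dots> = ev [oA,oA] [([],Dl,[oA]), ([oA,oA],Dl,[]), ([oA],Ep,[oA,oA]), ([oA,oA],Ep,[]), ([],Mu,[]), ([],Sg,[])]"
    by (rule stp[OF natr[where x=oA and d="[oA]" and P="[([],Ep,[])]"], where i=2 and l="[oA]" and r="[oA]" and Y="[([],Dl,[oA]), ([oA,oA],Dl,[]), ([oA],(Br oA oA),[oA]), ([oA,oA],Ep,[oA]), ([oA,oA],Ep,[]), ([],Mu,[]), ([],Sg,[])]"]) (simp_all add: rw_def)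
  also have "\<dots> = ev [oA,oA] [([oA],Dl,[]), ([oA,oA],Ep,[]), ([],Mu,[]), ([],Sg,[])]"
    by (rule stp[OF ax_counr, where i=0 and l="[]" and r="[oA]" and Y="[([],Dl,[oA]), ([oA],Ep,[oA]), ([oA],Dl,[]), ([oA,oA],Ep,[]), ([],Mu,[]), ([],Sg,[])]"]) (simp_all add: rw_def)
  also have "\<dots> = ev [oA,oA] [([],Mu,[]), ([],Sg,[])]"
    by (rule stp[OF ax_counr, where i=0 and l="[oA]" and r="[]" and Y="[([oA],Dl,[]), ([oA,oA],Ep,[]), ([],Mu,[]), ([],Sg,[])]"]) (simp_all add: rw_def)
  finally have E: "ev [oA,oA] [([],Dl,[oA]), ([oA,oA],Dl,[]), ([oA],(Br oA oA),[oA]), ([],Mu,[oA,oA]), ([],Sg,[oA,oA]), ([oA],Ep,[oA]), ([oA],Ep,[]), ([oA],Eta,[]), ([],Mu,[])] = ev [oA,oA] [([],Mu,[]), ([],Sg,[])]" .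
  then show ?thesis unfolding geq_def by simp
qed

lemma conv_ug: "geq [oA,oA] [([],Dl,[oA]), ([oA,oA],Dl,[]), ([oA],(Br oA oA),[oA]), ([],Mu,[oA,oA]), ([oA],Sg,[oA]), ([oA,oA],Sg,[]), ([oA],(Br oA oA),[]), ([oA],Mu,[]), ([],Mu,[])] [([],Ep,[oA]), ([],Ep,[]), ([],Eta,[])]"
proof -
  have "ev [oA,oA] [([],Dl,[oA]), ([oA,oA],Dl,[]), ([oA],(Br oA oA),[oA]), ([],Mu,[oA,oA]), ([oA],Sg,[oA]), ([oA,oA],Sg,[]), ([oA],(Br oA oA),[]), ([oA],Mu,[]), ([],Mu,[])] = ev [oA,oA] [([],Dl,[oA]), ([oA,oA],Dl,[]), ([oA],(Br oA oA),[oA]), ([],Mu,[oA,oA]), ([oA,oA],Sg,[]), ([oA],(Br oA oA),[]), ([oA,oA],Sg,[]), ([oA],Mu,[]), ([],Mu,[])]"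
    by (rule stp[OF geq_sym[OF natr[where x=oA and d="[oA]" and P="[([],Sg,[])]"]], where i=5 and l="[oA]" and r="[]" and Y="[([],Dl,[oA]), ([oA,oA],Dl,[]), ([oA],(Br oA oA),[oA]), ([],Mu,[oA,oA]), ([oA,oA],Sg,[]), ([oA],Sg,[oA]), ([oA],(Br oA oA),[]), ([oA],Mu,[]), ([],Mu,[])]"]) (simp_all add: rw_def)
  also have "\<dots> = ev [oA,oA] [([],Dl,[oA]), ([oA,oA],Dl,[]), ([oA],(Br oA oA),[oA]), ([],Mu,[oA,oA]), ([oA],(Br oA oA),[]), ([oA],Sg,[oA]), ([oA,oA],Sg,[]), ([oA],Mu,[]), ([],Mu,[])]"
    by (rule stp[OF geq_sym[OF natl[where x=oA and d="[oA]" and P="[([],Sg,[])]"]], where i=4 and l="[oA]" and r="[]" and Y="[([],Dl,[oA]), ([oA,oA],Dl,[]), ([oA],(Br oA oA),[oA]), ([],Mu,[oA,oA]), ([oA,oA],Sg,[]), ([oA],(Br oA oA),[]), ([oA,oA],Sg,[]), ([oA],Mu,[]), ([],Mu,[])]"]) (simp_all add: rw_def)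
  also have "\<dots> = ev [oA,oA] [([],Dl,[oA]), ([oA],(Br oA oA),[]), ([oA],Dl,[oA]), ([],Mu,[oA,oA]), ([oA],Sg,[oA]), ([oA,oA],Sg,[]), ([oA],Mu,[]), ([],Mu,[])]"
    by (rule stp[OF geq_sym[OF natl[where x=oA and d="[oA]" and P="[([],Dl,[])]"]], where i=1 and l="[oA]" and r="[]" and Y="[([],Dl,[oA]), ([oA,oA],Dl,[]), ([oA],(Br oA oA),[oA]), ([oA,oA],(Br oA oA),[]), ([],Mu,[oA,oA]), ([oA],Sg,[oA]), ([oA,oA],Sg,[]), ([oA],Mu,[]), ([],Mu,[])]"]) (simp_all add: rw_def)
  also have "\<dots> = ev [oA,oA] [([],Dl,[oA]), ([oA],(Br oA oA),[]), ([oA],Dl,[oA]), ([],Mu,[oA,oA]), ([oA],Sg,[oA]), ([oA,oA],Sg,[]), ([],Mu,[oA]), ([],Mu,[])]"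
    by (rule stp[OF geq_sym[OF ax_assoc], where i=6 and l="[]" and r="[]" and Y="[([],Dl,[oA]), ([oA],(Br oA oA),[]), ([oA],Dl,[oA]), ([],Mu,[oA,oA]), ([oA],Sg,[oA]), ([oA,oA],Sg,[]), ([oA],Mu,[]), ([],Mu,[])]"]) (simp_all add: rw_def)
  also have "\<dots> = ev [oA,oA] [([],Dl,[oA]), ([oA],(Br oA oA),[]), ([oA],Dl,[oA]), ([oA,oA],Sg,[oA]), ([oA,oA,oA],Sg,[]), ([oA],Mu,[oA]), ([],Mu,[oA]), ([],Mu,[])]"
    by (rule stp[OF ax_assoc, where i=5 and l="[]" and r="[oA]" and Y="[([],Dl,[oA]), ([oA],(Br oA oA),[]), ([oA],Dl,[oA]), ([oA,oA],Sg,[oA]), ([oA,oA,oA],Sg,[]), ([],Mu,[oA,oA]), ([],Mu,[oA]), ([],Mu,[])]"]) (simp_all add: rw_def)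
  also have "\<dots> = ev [oA,oA] [([],Dl,[oA]), ([oA],(Br oA oA),[]), ([oA],Ep,[oA]), ([oA],Eta,[oA]), ([oA,oA],Sg,[]), ([],Mu,[oA]), ([],Mu,[])]"
    by (rule stp[OF ax_antR, where i=2 and l="[oA]" and r="[oA]" and Y="[([],Dl,[oA]), ([oA],(Br oA oA),[]), ([oA],Dl,[oA]), ([oA,oA],Sg,[oA]), ([oA],Mu,[oA]), ([oA,oA],Sg,[]), ([],Mu,[oA]), ([],Mu,[])]"]) (simp_all add: rw_def)
  also have "\<dots> = ev [oA,oA] [([],Dl,[oA]), ([oA],(Br oA oA),[]), ([oA],Ep,[oA]), ([oA],Sg,[]), ([],Mu,[])]"
    by (rule stp[OF ax_unr, where i=4 and l="[]" and r="[oA]" and Y="[([],Dl,[oA]), ([oA],(Br oA oA),[]), ([oA],Ep,[oA]), ([oA],Sg,[]), ([oA],Eta,[oA]), ([],Mu,[oA]), ([],Mu,[])]"]) (simp_all add: rw_def)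
  also have "\<dots> = ev [oA,oA] [([],Dl,[oA]), ([oA,oA],Ep,[]), ([oA],Sg,[]), ([],Mu,[])]"
    by (rule stp[OF natl[where x=oA and d="[oA]" and P="[([],Ep,[])]"], where i=1 and l="[oA]" and r="[]" and Y="[([],Dl,[oA]), ([oA],(Br oA oA),[]), ([oA],Ep,[oA]), ([oA],Sg,[]), ([],Mu,[])]"]) (simp_all add: rw_def)
  also have "\<dots> = ev [oA,oA] [([oA],Ep,[]), ([],Ep,[]), ([],Eta,[])]"
    by (rule stp[OF ax_antR, where i=1 and l="[]" and r="[]" and Y="[([oA],Ep,[]), ([],Dl,[]), ([oA],Sg,[]), ([],Mu,[])]"]) (simp_all add: rw_def)
  also have "\<dots> = ev [oA,oA] [([],Ep,[oA]), ([],Ep,[]), ([],Eta,[])]"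
    by (rule stpI) simp_all
  finally have E: "ev [oA,oA] [([],Dl,[oA]), ([oA,oA],Dl,[]), ([oA],(Br oA oA),[oA]), ([],Mu,[oA,oA]), ([oA],Sg,[oA]), ([oA,oA],Sg,[]), ([oA],(Br oA oA),[]), ([oA],Mu,[]), ([],Mu,[])] = ev [oA,oA] [([],Ep,[oA]), ([],Ep,[]), ([],Eta,[])]" .
  then show ?thesis unfolding geq_def by simp
qed

lemma conv_fu: "geq [oA,oA] [([],Dl,[oA]), ([oA,oA],Dl,[]), ([oA],(Br oA oA),[oA]), ([],Mu,[oA,oA]), ([],Sg,[oA,oA]), ([oA],Mu,[]), ([],Mu,[])] [([],Ep,[oA]), ([],Ep,[]), ([],Eta,[])]"
proof -
  have "ev [oA,oA] [([],Dl,[oA]), ([oA,oA],Dl,[]), ([oA],(Br oA oA),[oA]), ([],Mu,[oA,oA]), ([],Sg,[oA,oA]), ([oA],Mu,[]), ([],Mu,[])] = ev [oA,oA] [([],Mu,[]), ([],Dl,[]), ([],Sg,[oA]), ([],Mu,[])]"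
    by (rule stp[OF geq_sym[OF ax_bialg], where i=0 and l="[]" and r="[]" and Y="[([],Dl,[oA]), ([oA,oA],Dl,[]), ([oA],(Br oA oA),[oA]), ([],Mu,[oA,oA]), ([oA],Mu,[]), ([],Sg,[oA]), ([],Mu,[])]"]) (simp_all add: rw_def)
  also have "\<dots> = ev [oA,oA] [([],Mu,[]), ([],Ep,[]), ([],Eta,[])]"
    by (rule stp[OF ax_antL, where i=1 and l="[]" and r="[]" and Y="[([],Mu,[]), ([],Dl,[]), ([],Sg,[oA]), ([],Mu,[])]"]) (simp_all add: rw_def)
  also have "\<dots> = ev [oA,oA] [([],Ep,[oA]), ([],Ep,[]), ([],Eta,[])]"
    by (rule stp[OF ax_epmu, where i=0 and l="[]" and r="[]" and Y="[([],Mu,[]), ([],Ep,[]), ([],Eta,[])]"]) (simp_all add: rw_def)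
  finally have E: "ev [oA,oA] [([],Dl,[oA]), ([oA,oA],Dl,[]), ([oA],(Br oA oA),[oA]), ([],Mu,[oA,oA]), ([],Sg,[oA,oA]), ([oA],Mu,[]), ([],Mu,[])] = ev [oA,oA] [([],Ep,[oA]), ([],Ep,[]), ([],Eta,[])]" .
  then show ?thesis unfolding geq_def by simp
qed

lemma conv_eg: "geq [oA,oA] [([],Dl,[oA]), ([oA,oA],Dl,[]), ([oA],(Br oA oA),[oA]), ([],Ep,[oA,oA,oA]), ([],Ep,[oA,oA]), ([],Eta,[oA,oA]), ([oA],Sg,[oA]), ([oA,oA],Sg,[]), ([oA],(Br oA oA),[]), ([oA],Mu,[]), ([],Mu,[])] [([],Sg,[oA]), ([oA],Sg,[]), ([],(Br oA oA),[]), ([],Mu,[])]"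
proof -
  have "ev [oA,oA] [([],Dl,[oA]), ([oA,oA],Dl,[]), ([oA],(Br oA oA),[oA]), ([],Ep,[oA,oA,oA]), ([],Ep,[oA,oA]), ([],Eta,[oA,oA]), ([oA],Sg,[oA]), ([oA,oA],Sg,[]), ([oA],(Br oA oA),[]), ([oA],Mu,[]), ([],Mu,[])] = ev [oA,oA] [([],Dl,[oA]), ([oA,oA],Dl,[]), ([oA],(Br oA oA),[oA]), ([],Ep,[oA,oA,oA]), ([],Ep,[oA,oA]), ([],Sg,[oA]), ([oA],Sg,[]), ([],(Br oA oA),[]), ([],Mu,[])]"
    by (rule stp[OF ax_unl, where i=9 and l="[]" and r="[]" and Y="[([],Dl,[oA]), ([oA,oA],Dl,[]), ([oA],(Br oA oA),[oA]), ([],Ep,[oA,oA,oA]), ([],Ep,[oA,oA]), ([],Sg,[oA]), ([oA],Sg,[]), ([],(Br oA oA),[]), ([],Mu,[]), ([],Eta,[oA]), ([],Mu,[])]"]) (simp_all add: rw_def)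
  also have "\<dots> = ev [oA,oA] [([],Dl,[oA]), ([oA,oA],Dl,[]), ([oA,oA],Ep,[oA]), ([],Ep,[oA,oA]), ([],Sg,[oA]), ([oA],Sg,[]), ([],(Br oA oA),[]), ([],Mu,[])]"
    by (rule stp[OF natl[where x=oA and d="[oA]" and P="[([],Ep,[])]"], where i=2 and l="[oA]" and r="[oA]" and Y="[([],Dl,[oA]), ([oA,oA],Dl,[]), ([oA],(Br oA oA),[oA]), ([oA],Ep,[oA,oA]), ([],Ep,[oA,oA]), ([],Sg,[oA]), ([oA],Sg,[]), ([],(Br oA oA),[]), ([],Mu,[])]"]) (simp_all add: rw_def)
  also have "\<dots> = ev [oA,oA] [([oA],Dl,[]), ([oA],Ep,[oA]), ([],Sg,[oA]), ([oA],Sg,[]), ([],(Br oA oA),[]), ([],Mu,[])]"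
    by (rule stp[OF ax_counl, where i=0 and l="[]" and r="[oA]" and Y="[([],Dl,[oA]), ([],Ep,[oA,oA]), ([oA],Dl,[]), ([oA],Ep,[oA]), ([],Sg,[oA]), ([oA],Sg,[]), ([],(Br oA oA),[]), ([],Mu,[])]"]) (simp_all add: rw_def)
  also have "\<dots> = ev [oA,oA] [([],Sg,[oA]), ([oA],Sg,[]), ([],(Br oA oA),[]), ([],Mu,[])]"
    by (rule stp[OF ax_counl, where i=0 and l="[oA]" and r="[]" and Y="[([oA],Dl,[]), ([oA],Ep,[oA]), ([],Sg,[oA]), ([oA],Sg,[]), ([],(Br oA oA),[]), ([],Mu,[])]"]) (simp_all add: rw_def)
  finally have E: "ev [oA,oA] [([],Dl,[oA]), ([oA,oA],Dl,[]), ([oA],(Br oA oA),[oA]), ([],Ep,[oA,oA,oA]), ([],Ep,[oA,oA]), ([],Eta,[oA,oA]), ([oA],Sg,[oA]), ([oA,oA],Sg,[]), ([oA],(Br oA oA),[]), ([oA],Mu,[]), ([],Mu,[])] = ev [oA,oA] [([],Sg,[oA]), ([oA],Sg,[]), ([],(Br oA oA),[]), ([],Mu,[])]" .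
  then show ?thesis unfolding geq_def by simp
qed

lemma D2co: "geq [oA,oA] [([],Dl,[oA]), ([oA,oA],Dl,[]), ([oA],(Br oA oA),[oA]), ([],Dl,[oA,oA,oA]), ([oA,oA],Dl,[oA,oA]), ([oA],(Br oA oA),[oA,oA,oA])] [([],Dl,[oA]), ([oA,oA],Dl,[]), ([oA],(Br oA oA),[oA]), ([oA,oA],Dl,[oA]), ([oA,oA,oA,oA],Dl,[]), ([oA,oA,oA],(Br oA oA),[oA])]"
proof -
  have "ev [oA,oA] [([],Dl,[oA]), ([oA,oA],Dl,[]), ([oA],(Br oA oA),[oA]), ([],Dl,[oA,oA,oA]), ([oA,oA],Dl,[oA,oA]), ([oA],(Br oA oA),[oA,oA,oA])] = ev [oA,oA] [([],Dl,[oA]), ([oA,oA],Dl,[]), ([oA,oA],Dl,[oA]), ([oA],(Br oA oA),[oA,oA]), ([oA,oA],(Br oA oA),[oA]), ([],Dl,[oA,oA,oA,oA]), ([oA],(Br oA oA),[oA,oA,oA])]"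
    by (rule stp[OF natl[where x=oA and d="[oA]" and P="[([],Dl,[])]"], where i=2 and l="[oA]" and r="[oA]" and Y="[([],Dl,[oA]), ([oA,oA],Dl,[]), ([oA],(Br oA oA),[oA]), ([oA],Dl,[oA,oA]), ([],Dl,[oA,oA,oA,oA]), ([oA],(Br oA oA),[oA,oA,oA])]"]) (simp_all add: rw_def)
  also have "\<dots> = ev [oA,oA] [([],Dl,[oA]), ([oA],Dl,[oA]), ([oA,oA,oA],Dl,[]), ([oA,oA,oA],Dl,[oA]), ([oA,oA],(Br oA oA),[oA,oA]), ([oA,oA,oA],(Br oA oA),[oA]), ([oA],(Br oA oA),[oA,oA,oA])]"
    by (rule stp[OF ax_coassoc, where i=0 and l="[]" and r="[oA]" and Y="[([],Dl,[oA]), ([],Dl,[oA,oA]), ([oA,oA,oA],Dl,[]), ([oA,oA,oA],Dl,[oA]), ([oA,oA],(Br oA oA),[oA,oA]), ([oA,oA,oA],(Br oA oA),[oA]), ([oA],(Br oA oA),[oA,oA,oA])]"]) (simp_all add: rw_def)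
  also have "\<dots> = ev [oA,oA] [([],Dl,[oA]), ([oA],Dl,[oA]), ([oA,oA,oA],Dl,[]), ([oA,oA,oA,oA],Dl,[]), ([oA,oA],(Br oA oA),[oA,oA]), ([oA,oA,oA],(Br oA oA),[oA]), ([oA],(Br oA oA),[oA,oA,oA])]"
    by (rule stp[OF ax_coassoc, where i=2 and l="[oA,oA,oA]" and r="[]" and Y="[([],Dl,[oA]), ([oA],Dl,[oA]), ([oA,oA,oA],Dl,[]), ([oA,oA,oA],Dl,[oA]), ([oA,oA],(Br oA oA),[oA,oA]), ([oA,oA,oA],(Br oA oA),[oA]), ([oA],(Br oA oA),[oA,oA,oA])]"]) (simp_all add: rw_def)
  also have "\<dots> = ev [oA,oA] [([],Dl,[oA]), ([oA,oA],Dl,[]), ([oA],(Br oA oA),[oA]), ([oA,oA],Dl,[oA]), ([oA,oA,oA,oA],Dl,[]), ([oA,oA,oA],(Br oA oA),[oA])]"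
    by (rule stp[OF geq_sym[OF natr[where x=oA and d="[oA]" and P="[([],Dl,[])]"]], where i=2 and l="[oA]" and r="[oA]" and Y="[([],Dl,[oA]), ([oA,oA],Dl,[]), ([oA],Dl,[oA,oA]), ([oA,oA],(Br oA oA),[oA]), ([oA],(Br oA oA),[oA,oA]), ([oA,oA,oA,oA],Dl,[]), ([oA,oA,oA],(Br oA oA),[oA])]"]) (simp_all add: rw_def)
  finally have E: "ev [oA,oA] [([],Dl,[oA]), ([oA,oA],Dl,[]), ([oA],(Br oA oA),[oA]), ([],Dl,[oA,oA,oA]), ([oA,oA],Dl,[oA,oA]), ([oA],(Br oA oA),[oA,oA,oA])] = ev [oA,oA] [([],Dl,[oA]), ([oA,oA],Dl,[]), ([oA],(Br oA oA),[oA]), ([oA,oA],Dl,[oA]), ([oA,oA,oA,oA],Dl,[]), ([oA,oA,oA],(Br oA oA),[oA])]" .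
  then show ?thesis unfolding geq_def by simp
qed

lemma conv_assoc: "geq [oA,oA] [([],Dl,[oA]), ([oA,oA],Dl,[]), ([oA],(Br oA oA),[oA]), ([],Mu,[oA,oA]), ([],Sg,[oA,oA]), ([oA],Dl,[oA]), ([oA,oA,oA],Dl,[]), ([oA,oA],(Br oA oA),[oA]), ([oA],Mu,[oA,oA]), ([oA,oA],Sg,[oA]), ([oA,oA,oA],Sg,[]), ([oA,oA],(Br oA oA),[]), ([oA,oA],Mu,[]), ([oA],Mu,[]), ([],Mu,[])] [([],Dl,[oA]), ([oA,oA],Dl,[]), ([oA],(Br oA oA),[oA]), ([],Dl,[oA,oA,oA]), ([oA,oA],Dl,[oA,oA]), ([oA],(Br oA oA),[oA,oA,oA]), ([],Mu,[oA,oA,oA,oA]), ([],Sg,[oA,oA,oA,oA]), ([oA],Mu,[oA,oA]), ([],Mu,[oA,oA]), ([oA],Sg,[oA]), ([oA,oA],Sg,[]), ([oA],(Br oA oA),[]), ([oA],Mu,[]), ([],Mu,[])]"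
proof -
  have "ev [oA,oA] [([],Dl,[oA]), ([oA,oA],Dl,[]), ([oA],(Br oA oA),[oA]), ([],Mu,[oA,oA]), ([],Sg,[oA,oA]), ([oA],Dl,[oA]), ([oA,oA,oA],Dl,[]), ([oA,oA],(Br oA oA),[oA]), ([oA],Mu,[oA,oA]), ([oA,oA],Sg,[oA]), ([oA,oA,oA],Sg,[]), ([oA,oA],(Br oA oA),[]), ([oA,oA],Mu,[]), ([oA],Mu,[]), ([],Mu,[])] = ev [oA,oA] [([],Dl,[oA]), ([oA,oA],Dl,[]), ([oA],(Br oA oA),[oA]), ([],Dl,[oA,oA,oA]), ([oA,oA],Dl,[oA,oA]), ([oA],(Br oA oA),[oA,oA,oA]), ([],Mu,[oA,oA,oA,oA]), ([],Sg,[oA,oA,oA,oA]), ([oA],Mu,[oA,oA]), ([oA,oA],Sg,[oA]), ([oA,oA,oA],Sg,[]), ([oA,oA],(Br oA oA),[]), ([oA,oA],Mu,[]), ([oA],Mu,[]), ([],Mu,[])]"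
    by (rule stp[OF geq_sym[OF D2co], where i=0 and l="[]" and r="[]" and Y="[([],Dl,[oA]), ([oA,oA],Dl,[]), ([oA],(Br oA oA),[oA]), ([oA,oA],Dl,[oA]), ([oA,oA,oA,oA],Dl,[]), ([oA,oA,oA],(Br oA oA),[oA]), ([],Mu,[oA,oA,oA,oA]), ([],Sg,[oA,oA,oA,oA]), ([oA],Mu,[oA,oA]), ([oA,oA],Sg,[oA]), ([oA,oA,oA],Sg,[]), ([oA,oA],(Br oA oA),[]), ([oA,oA],Mu,[]), ([oA],Mu,[]), ([],Mu,[])]"]) (simp_all add: rw_def)
  also have "\<dots> = ev [oA,oA] [([],Dl,[oA]), ([oA,oA],Dl,[]), ([oA],(Br oA oA),[oA]), ([],Dl,[oA,oA,oA]), ([oA,oA],Dl,[oA,oA]), ([oA],(Br oA oA),[oA,oA,oA]), ([],Mu,[oA,oA,oA,oA]), ([],Sg,[oA,oA,oA,oA]), ([oA],Mu,[oA,oA]), ([oA,oA],Sg,[oA]), ([oA,oA,oA],Sg,[]), ([oA,oA],(Br oA oA),[]), ([oA,oA],Mu,[]), ([],Mu,[oA]), ([],Mu,[])]"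
    by (rule stp[OF geq_sym[OF ax_assoc], where i=13 and l="[]" and r="[]" and Y="[([],Dl,[oA]), ([oA,oA],Dl,[]), ([oA],(Br oA oA),[oA]), ([],Dl,[oA,oA,oA]), ([oA,oA],Dl,[oA,oA]), ([oA],(Br oA oA),[oA,oA,oA]), ([],Mu,[oA,oA,oA,oA]), ([],Sg,[oA,oA,oA,oA]), ([oA],Mu,[oA,oA]), ([oA,oA],Sg,[oA]), ([oA,oA,oA],Sg,[]), ([oA,oA],(Br oA oA),[]), ([oA,oA],Mu,[]), ([oA],Mu,[]), ([],Mu,[])]"]) (simp_all add: rw_def)
  also have "\<dots> = ev [oA,oA] [([],Dl,[oA]), ([oA,oA],Dl,[]), ([oA],(Br oA oA),[oA]), ([],Dl,[oA,oA,oA]), ([oA,oA],Dl,[oA,oA]), ([oA],(Br oA oA),[oA,oA,oA]), ([],Mu,[oA,oA,oA,oA]), ([],Sg,[oA,oA,oA,oA]), ([oA],Mu,[oA,oA]), ([],Mu,[oA,oA]), ([oA],Sg,[oA]), ([oA,oA],Sg,[]), ([oA],(Br oA oA),[]), ([oA],Mu,[]), ([],Mu,[])]"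
    by (rule stpI) simp_all
  finally have E: "ev [oA,oA] [([],Dl,[oA]), ([oA,oA],Dl,[]), ([oA],(Br oA oA),[oA]), ([],Mu,[oA,oA]), ([],Sg,[oA,oA]), ([oA],Dl,[oA]), ([oA,oA,oA],Dl,[]), ([oA,oA],(Br oA oA),[oA]), ([oA],Mu,[oA,oA]), ([oA,oA],Sg,[oA]), ([oA,oA,oA],Sg,[]), ([oA,oA],(Br oA oA),[]), ([oA,oA],Mu,[]), ([oA],Mu,[]), ([],Mu,[])] = ev [oA,oA] [([],Dl,[oA]), ([oA,oA],Dl,[]), ([oA],(Br oA oA),[oA]), ([],Dl,[oA,oA,oA]), ([oA,oA],Dl,[oA,oA]), ([oA],(Br oA oA),[oA,oA,oA]), ([],Mu,[oA,oA,oA,oA]), ([],Sg,[oA,oA,oA,oA]), ([oA],Mu,[oA,oA]), ([],Mu,[oA,oA]), ([oA],Sg,[oA]), ([oA,oA],Sg,[]), ([oA],(Br oA oA),[]), ([oA],Mu,[]), ([],Mu,[])]" .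
  then show ?thesis unfolding geq_def by simp
qed

lemma antim: "geq [oA,oA] [([],Mu,[]), ([],Sg,[])] [([],Sg,[oA]), ([oA],Sg,[]), ([],(Br oA oA),[]), ([],Mu,[])]"
proof -
  have "ev [oA,oA] [([],Mu,[]), ([],Sg,[])] = ev [oA,oA] [([],Dl,[oA]), ([oA,oA],Dl,[]), ([oA],(Br oA oA),[oA]), ([],Mu,[oA,oA]), ([],Sg,[oA,oA]), ([oA],Ep,[oA]), ([oA],Ep,[]), ([oA],Eta,[]), ([],Mu,[])]"
    by (rule stp[OF geq_sym[OF conv_fe], where i=0 and l="[]" and r="[]" and Y="[([],Mu,[]), ([],Sg,[])]"]) (simp_all add: rw_def)
  also have "\<dots> = ev [oA,oA] [([],Dl,[oA]), ([oA,oA],Dl,[]), ([oA],(Br oA oA),[oA]), ([],Mu,[oA,oA]), ([],Sg,[oA,oA]), ([oA],Dl,[oA]), ([oA,oA,oA],Dl,[]), ([oA,oA],(Br oA oA),[oA]), ([oA],Mu,[oA,oA]), ([oA,oA],Sg,[oA]), ([oA,oA,oA],Sg,[]), ([oA,oA],(Br oA oA),[]), ([oA,oA],Mu,[]), ([oA],Mu,[]), ([],Mu,[])]"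
    by (rule stp[OF geq_sym[OF conv_ug], where i=5 and l="[oA]" and r="[]" and Y="[([],Dl,[oA]), ([oA,oA],Dl,[]), ([oA],(Br oA oA),[oA]), ([],Mu,[oA,oA]), ([],Sg,[oA,oA]), ([oA],Ep,[oA]), ([oA],Ep,[]), ([oA],Eta,[]), ([],Mu,[])]"]) (simp_all add: rw_def)
  also have "\<dots> = ev [oA,oA] [([],Dl,[oA]), ([oA,oA],Dl,[]), ([oA],(Br oA oA),[oA]), ([],Dl,[oA,oA,oA]), ([oA,oA],Dl,[oA,oA]), ([oA],(Br oA oA),[oA,oA,oA]), ([],Mu,[oA,oA,oA,oA]), ([],Sg,[oA,oA,oA,oA]), ([oA],Mu,[oA,oA]), ([],Mu,[oA,oA]), ([oA],Sg,[oA]), ([oA,oA],Sg,[]), ([oA],(Br oA oA),[]), ([oA],Mu,[]), ([],Mu,[])]"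
    by (rule stp[OF conv_assoc, where i=0 and l="[]" and r="[]" and Y="[([],Dl,[oA]), ([oA,oA],Dl,[]), ([oA],(Br oA oA),[oA]), ([],Mu,[oA,oA]), ([],Sg,[oA,oA]), ([oA],Dl,[oA]), ([oA,oA,oA],Dl,[]), ([oA,oA],(Br oA oA),[oA]), ([oA],Mu,[oA,oA]), ([oA,oA],Sg,[oA]), ([oA,oA,oA],Sg,[]), ([oA,oA],(Br oA oA),[]), ([oA,oA],Mu,[]), ([oA],Mu,[]), ([],Mu,[])]"]) (simp_all add: rw_def)
  also have "\<dots> = ev [oA,oA] [([],Dl,[oA]), ([oA,oA],Dl,[]), ([oA],(Br oA oA),[oA]), ([],Ep,[oA,oA,oA]), ([],Ep,[oA,oA]), ([],Eta,[oA,oA]), ([oA],Sg,[oA]), ([oA,oA],Sg,[]), ([oA],(Br oA oA),[]), ([oA],Mu,[]), ([],Mu,[])]"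
    by (rule stp[OF conv_fu, where i=3 and l="[]" and r="[oA,oA]" and Y="[([],Dl,[oA]), ([oA,oA],Dl,[]), ([oA],(Br oA oA),[oA]), ([],Dl,[oA,oA,oA]), ([oA,oA],Dl,[oA,oA]), ([oA],(Br oA oA),[oA,oA,oA]), ([],Mu,[oA,oA,oA,oA]), ([],Sg,[oA,oA,oA,oA]), ([oA],Mu,[oA,oA]), ([],Mu,[oA,oA]), ([oA],Sg,[oA]), ([oA,oA],Sg,[]), ([oA],(Br oA oA),[]), ([oA],Mu,[]), ([],Mu,[])]"]) (simp_all add: rw_def)
  also have "\<dots> = ev [oA,oA] [([],Sg,[oA]), ([oA],Sg,[]), ([],(Br oA oA),[]), ([],Mu,[])]"
    by (rule stp[OF conv_eg, where i=0 and l="[]" and r="[]" and Y="[([],Dl,[oA]), ([oA,oA],Dl,[]), ([oA],(Br oA oA),[oA]), ([],Ep,[oA,oA,oA]), ([],Ep,[oA,oA]), ([],Eta,[oA,oA]), ([oA],Sg,[oA]), ([oA,oA],Sg,[]), ([oA],(Br oA oA),[]), ([oA],Mu,[]), ([],Mu,[])]"]) (simp_all add: rw_def)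
  finally have E: "ev [oA,oA] [([],Mu,[]), ([],Sg,[])] = ev [oA,oA] [([],Sg,[oA]), ([oA],Sg,[]), ([],(Br oA oA),[]), ([],Mu,[])]" .
  then show ?thesis unfolding geq_def by simp
qed

lemma siform_r: "geq [oA,oA] [([],Bi,[]), ([],Si,[oA]), ([oA],Si,[]), ([],Mu,[])] [([],Mu,[]), ([],Si,[])]"
proof -
  have "ev [oA,oA] [([],Bi,[]), ([],Si,[oA]), ([oA],Si,[]), ([],Mu,[])] = ev [oA,oA] [([],Bi,[]), ([],Si,[oA]), ([oA],Si,[]), ([],Mu,[]), ([],Sg,[]), ([],Si,[])]"
    by (rule stp[OF geq_sym[OF ax_SSi], where i=4 and l="[]" and r="[]" and Y="[([],Bi,[]), ([],Si,[oA]), ([oA],Si,[]), ([],Mu,[])]"]) (simp_all add: rw_def)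
  also have "\<dots> = ev [oA,oA] [([],Bi,[]), ([],Si,[oA]), ([oA],Si,[]), ([],Sg,[oA]), ([oA],Sg,[]), ([],(Br oA oA),[]), ([],Mu,[]), ([],Si,[])]"
    by (rule stp[OF antim, where i=3 and l="[]" and r="[]" and Y="[([],Bi,[]), ([],Si,[oA]), ([oA],Si,[]), ([],Mu,[]), ([],Sg,[]), ([],Si,[])]"]) (simp_all add: rw_def)
  also have "\<dots> = ev [oA,oA] [([],Bi,[]), ([oA],Si,[]), ([oA],Sg,[]), ([],(Br oA oA),[]), ([],Mu,[]), ([],Si,[])]"
    by (rule stp[OF ax_SiS, where i=1 and l="[]" and r="[oA]" and Y="[([],Bi,[]), ([],Si,[oA]), ([],Sg,[oA]), ([oA],Si,[]), ([oA],Sg,[]), ([],(Br oA oA),[]), ([],Mu,[]), ([],Si,[])]"]) (simp_all add: rw_def)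
  also have "\<dots> = ev [oA,oA] [([],Bi,[]), ([],(Br oA oA),[]), ([],Mu,[]), ([],Si,[])]"
    by (rule stp[OF ax_SiS, where i=1 and l="[oA]" and r="[]" and Y="[([],Bi,[]), ([oA],Si,[]), ([oA],Sg,[]), ([],(Br oA oA),[]), ([],Mu,[]), ([],Si,[])]"]) (simp_all add: rw_def)
  also have "\<dots> = ev [oA,oA] [([],Mu,[]), ([],Si,[])]"
    by (rule stp[OF ax_bbi, where i=0 and l="[]" and r="[]" and Y="[([],Bi,[]), ([],(Br oA oA),[]), ([],Mu,[]), ([],Si,[])]"]) (simp_all add: rw_def)
  finally have E: "ev [oA,oA] [([],Bi,[]), ([],Si,[oA]), ([oA],Si,[]), ([],Mu,[])] = ev [oA,oA] [([],Mu,[]), ([],Si,[])]" .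
  then show ?thesis unfolding geq_def by simp
qed

lemma tform: "geq [oA,oA] [([],Mu,[]), ([],Si,[]), ([],Sm,[])] [([],(Br oA oA),[]), ([],Si,[oA]), ([],Sm,[oA]), ([oA],Si,[]), ([oA],Sm,[]), ([],Mu,[])]"
proof -
  have "ev [oA,oA] [([],Mu,[]), ([],Si,[]), ([],Sm,[])] = ev [oA,oA] [([],Bi,[]), ([],Si,[oA]), ([oA],Si,[]), ([],Mu,[]), ([],Sm,[])]"
    by (rule stp[OF geq_sym[OF siform_r], where i=0 and l="[]" and r="[]" and Y="[([],Mu,[]), ([],Si,[]), ([],Sm,[])]"]) (simp_all add: rw_def)
  also have "\<dots> = ev [oA,oA] [([],Bi,[]), ([],Si,[oA]), ([oA],Si,[]), ([],(Br oA oA),[]), ([],(Br oA oA),[]), ([],Sm,[oA]), ([oA],Sm,[]), ([],Mu,[])]"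
    by (rule stp[OF ax_sigmu, where i=3 and l="[]" and r="[]" and Y="[([],Bi,[]), ([],Si,[oA]), ([oA],Si,[]), ([],Mu,[]), ([],Sm,[])]"]) (simp_all add: rw_def)
  also have "\<dots> = ev [oA,oA] [([],Bi,[]), ([],Si,[oA]), ([],(Br oA oA),[]), ([],Si,[oA]), ([],(Br oA oA),[]), ([],Sm,[oA]), ([oA],Sm,[]), ([],Mu,[])]"
    by (rule stp[OF geq_sym[OF natl[where x=oA and d="[oA]" and P="[([],Si,[])]"]], where i=2 and l="[]" and r="[]" and Y="[([],Bi,[]), ([],Si,[oA]), ([oA],Si,[]), ([],(Br oA oA),[]), ([],(Br oA oA),[]), ([],Sm,[oA]), ([oA],Sm,[]), ([],Mu,[])]"]) (simp_all add: rw_def)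
  also have "\<dots> = ev [oA,oA] [([],Bi,[]), ([],(Br oA oA),[]), ([oA],Si,[]), ([],Si,[oA]), ([],(Br oA oA),[]), ([],Sm,[oA]), ([oA],Sm,[]), ([],Mu,[])]"
    by (rule stp[OF geq_sym[OF natr[where x=oA and d="[oA]" and P="[([],Si,[])]"]], where i=1 and l="[]" and r="[]" and Y="[([],Bi,[]), ([],Si,[oA]), ([],(Br oA oA),[]), ([],Si,[oA]), ([],(Br oA oA),[]), ([],Sm,[oA]), ([oA],Sm,[]), ([],Mu,[])]"]) (simp_all add: rw_def)
  also have "\<dots> = ev [oA,oA] [([],Bi,[]), ([],(Br oA oA),[]), ([],Si,[oA]), ([],(Br oA oA),[]), ([],Si,[oA]), ([],Sm,[oA]), ([oA],Sm,[]), ([],Mu,[])]"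
    by (rule stp[OF geq_sym[OF natl[where x=oA and d="[oA]" and P="[([],Si,[])]"]], where i=3 and l="[]" and r="[]" and Y="[([],Bi,[]), ([],(Br oA oA),[]), ([],Si,[oA]), ([oA],Si,[]), ([],(Br oA oA),[]), ([],Sm,[oA]), ([oA],Sm,[]), ([],Mu,[])]"]) (simp_all add: rw_def)
  also have "\<dots> = ev [oA,oA] [([],Bi,[]), ([],(Br oA oA),[]), ([],(Br oA oA),[]), ([oA],Si,[]), ([],Si,[oA]), ([],Sm,[oA]), ([oA],Sm,[]), ([],Mu,[])]"
    by (rule stp[OF geq_sym[OF natr[where x=oA and d="[oA]" and P="[([],Si,[])]"]], where i=2 and l="[]" and r="[]" and Y="[([],Bi,[]), ([],(Br oA oA),[]), ([],Si,[oA]), ([],(Br oA oA),[]), ([],Si,[oA]), ([],Sm,[oA]), ([oA],Sm,[]), ([],Mu,[])]"]) (simp_all add: rw_def)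
  also have "\<dots> = ev [oA,oA] [([],(Br oA oA),[]), ([oA],Si,[]), ([],Si,[oA]), ([],Sm,[oA]), ([oA],Sm,[]), ([],Mu,[])]"
    by (rule stp[OF ax_bbi, where i=0 and l="[]" and r="[]" and Y="[([],Bi,[]), ([],(Br oA oA),[]), ([],(Br oA oA),[]), ([oA],Si,[]), ([],Si,[oA]), ([],Sm,[oA]), ([oA],Sm,[]), ([],Mu,[])]"]) (simp_all add: rw_def)
  also have "\<dots> = ev [oA,oA] [([],(Br oA oA),[]), ([],Si,[oA]), ([],Sm,[oA]), ([oA],Si,[]), ([oA],Sm,[]), ([],Mu,[])]"
    by (rule stpI) simp_all
  finally have E: "ev [oA,oA] [([],Mu,[]), ([],Si,[]), ([],Sm,[])] = ev [oA,oA] [([],(Br oA oA),[]), ([],Si,[oA]), ([],Sm,[oA]), ([oA],Si,[]), ([oA],Sm,[]), ([],Mu,[])]" .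
  then show ?thesis unfolding geq_def by simp
qed

lemma main_deep: "geq [oM,oA,oA] [([oM],Mu,[]), ([oM],Dl,[]), ([],(Br oM oA),[oA]), ([],Si,[oM,oA]), ([],Sm,[oM,oA]), ([],Lc,[oA]), ([],Rc,[])] [([oM],Dl,[oA]), ([],(Br oM oA),[oA,oA]), ([],Si,[oM,oA,oA]), ([],Sm,[oM,oA,oA]), ([],Lc,[oA,oA]), ([],Rc,[oA]), ([oM],Dl,[]), ([],(Br oM oA),[oA]), ([],Si,[oM,oA]), ([],Sm,[oM,oA]), ([],Lc,[oA]), ([],Rc,[])]"
proof -
  have "ev [oM,oA,oA] [([oM],Mu,[]), ([oM],Dl,[]), ([],(Br oM oA),[oA]), ([],Si,[oM,oA]), ([],Sm,[oM,oA]), ([],Lc,[oA]), ([],Rc,[])] = ev [oM,oA,oA] [([oM],Dl,[oA]), ([oM,oA,oA],Dl,[]), ([oM,oA],(Br oA oA),[oA]), ([oM],Mu,[oA,oA]), ([oM,oA],Mu,[]), ([],(Br oM oA),[oA]), ([],Si,[oM,oA]), ([],Sm,[oM,oA]), ([],Lc,[oA]), ([],Rc,[])]"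
    by (rule stp[OF ax_bialg, where i=0 and l="[oM]" and r="[]" and Y="[([oM],Mu,[]), ([oM],Dl,[]), ([],(Br oM oA),[oA]), ([],Si,[oM,oA]), ([],Sm,[oM,oA]), ([],Lc,[oA]), ([],Rc,[])]"]) (simp_all add: rw_def)
  also have "\<dots> = ev [oM,oA,oA] [([oM],Dl,[oA]), ([oM,oA,oA],Dl,[]), ([oM,oA],(Br oA oA),[oA]), ([],(Br oM oA),[oA,oA,oA]), ([oA],(Br oM oA),[oA,oA]), ([],Mu,[oM,oA,oA]), ([oA,oM],Mu,[]), ([],Si,[oM,oA]), ([],Sm,[oM,oA]), ([],Lc,[oA]), ([],Rc,[])]"
    by (rule stp[OF geq_sym[OF natl[where x=oM and d="[oA,oA]" and P="[([],Mu,[])]"]], where i=3 and l="[]" and r="[oA,oA]" and Y="[([oM],Dl,[oA]), ([oM,oA,oA],Dl,[]), ([oM,oA],(Br oA oA),[oA]), ([oM],Mu,[oA,oA]), ([],(Br oM oA),[oA,oA]), ([oA,oM],Mu,[]), ([],Si,[oM,oA]), ([],Sm,[oM,oA]), ([],Lc,[oA]), ([],Rc,[])]"]) (simp_all add: rw_def)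
  also have "\<dots> = ev [oM,oA,oA] [([oM],Dl,[oA]), ([oM,oA,oA],Dl,[]), ([oM,oA],(Br oA oA),[oA]), ([],(Br oM oA),[oA,oA,oA]), ([oA],(Br oM oA),[oA,oA]), ([oA,oA,oM],Mu,[]), ([],(Br oA oA),[oM,oA]), ([],Si,[oA,oM,oA]), ([],Sm,[oA,oM,oA]), ([oA],Si,[oM,oA]), ([oA],Sm,[oM,oA]), ([],Mu,[oM,oA]), ([],Lc,[oA]), ([],Rc,[])]"
    by (rule stp[OF tform, where i=6 and l="[]" and r="[oM,oA]" and Y="[([oM],Dl,[oA]), ([oM,oA,oA],Dl,[]), ([oM,oA],(Br oA oA),[oA]), ([],(Br oM oA),[oA,oA,oA]), ([oA],(Br oM oA),[oA,oA]), ([oA,oA,oM],Mu,[]), ([],Mu,[oM,oA]), ([],Si,[oM,oA]), ([],Sm,[oM,oA]), ([],Lc,[oA]), ([],Rc,[])]"]) (simp_all add: rw_def)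
  also have "\<dots> = ev [oM,oA,oA] [([oM],Dl,[oA]), ([oM,oA,oA],Dl,[]), ([oM,oA],(Br oA oA),[oA]), ([],(Br oM oA),[oA,oA,oA]), ([oA],(Br oM oA),[oA,oA]), ([oA,oA,oM],Mu,[]), ([],(Br oA oA),[oM,oA]), ([],Si,[oA,oM,oA]), ([],Sm,[oA,oM,oA]), ([oA],Si,[oM,oA]), ([oA],Sm,[oM,oA]), ([oA],Lc,[oA]), ([],Lc,[oA]), ([],Rc,[])]"
    by (rule stp[OF ax_lassoc, where i=11 and l="[]" and r="[oA]" and Y="[([oM],Dl,[oA]), ([oM,oA,oA],Dl,[]), ([oM,oA],(Br oA oA),[oA]), ([],(Br oM oA),[oA,oA,oA]), ([oA],(Br oM oA),[oA,oA]), ([oA,oA,oM],Mu,[]), ([],(Br oA oA),[oM,oA]), ([],Si,[oA,oM,oA]), ([],Sm,[oA,oM,oA]), ([oA],Si,[oM,oA]), ([oA],Sm,[oM,oA]), ([],Mu,[oM,oA]), ([],Lc,[oA]), ([],Rc,[])]"]) (simp_all add: rw_def)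
  also have "\<dots> = ev [oM,oA,oA] [([oM],Dl,[oA]), ([oM,oA,oA],Dl,[]), ([oM,oA],(Br oA oA),[oA]), ([],(Br oM oA),[oA,oA,oA]), ([oA],(Br oM oA),[oA,oA]), ([],(Br oA oA),[oM,oA,oA]), ([],Si,[oA,oM,oA,oA]), ([],Sm,[oA,oM,oA,oA]), ([oA],Si,[oM,oA,oA]), ([oA],Sm,[oM,oA,oA]), ([oA],Lc,[oA,oA]), ([],Lc,[oA,oA]), ([],Rc,[oA]), ([],Rc,[])]"
    by (rule stp[OF geq_sym[OF ax_rassoc], where i=12 and l="[]" and r="[]" and Y="[([oM],Dl,[oA]), ([oM,oA,oA],Dl,[]), ([oM,oA],(Br oA oA),[oA]), ([],(Br oM oA),[oA,oA,oA]), ([oA],(Br oM oA),[oA,oA]), ([],(Br oA oA),[oM,oA,oA]), ([],Si,[oA,oM,oA,oA]), ([],Sm,[oA,oM,oA,oA]), ([oA],Si,[oM,oA,oA]), ([oA],Sm,[oM,oA,oA]), ([oA],Lc,[oA,oA]), ([],Lc,[oA,oA]), ([oM],Mu,[]), ([],Rc,[])]"]) (simp_all add: rw_def)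
  also have "\<dots> = ev [oM,oA,oA] [([oM],Dl,[oA]), ([oM,oA,oA],Dl,[]), ([oM,oA],(Br oA oA),[oA]), ([],(Br oM oA),[oA,oA,oA]), ([oA],(Br oM oA),[oA,oA]), ([],(Br oA oA),[oM,oA,oA]), ([],Si,[oA,oM,oA,oA]), ([],Sm,[oA,oM,oA,oA]), ([oA],Si,[oM,oA,oA]), ([oA],Sm,[oM,oA,oA]), ([oA],Lc,[oA,oA]), ([oA],Rc,[oA]), ([],Lc,[oA]), ([],Rc,[])]"
    by (rule stp[OF geq_sym[OF ax_bimod], where i=11 and l="[]" and r="[oA]" and Y="[([oM],Dl,[oA]), ([oM,oA,oA],Dl,[]), ([oM,oA],(Br oA oA),[oA]), ([],(Br oM oA),[oA,oA,oA]), ([oA],(Br oM oA),[oA,oA]), ([],(Br oA oA),[oM,oA,oA]), ([],Si,[oA,oM,oA,oA]), ([],Sm,[oA,oM,oA,oA]), ([oA],Si,[oM,oA,oA]), ([oA],Sm,[oM,oA,oA]), ([oA],Lc,[oA,oA]), ([],Lc,[oA,oA]), ([],Rc,[oA]), ([],Rc,[])]"]) (simp_all add: rw_def)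
  also have "\<dots> = ev [oM,oA,oA] [([oM],Dl,[oA]), ([oM,oA,oA],Dl,[]), ([oM,oA],(Br oA oA),[oA]), ([],(Br oM oA),[oA,oA,oA]), ([oA],(Br oM oA),[oA,oA]), ([],Si,[oA,oM,oA,oA]), ([],(Br oA oA),[oM,oA,oA]), ([oA],Sm,[oM,oA,oA]), ([],Si,[oA,oM,oA,oA]), ([],Sm,[oA,oM,oA,oA]), ([oA],Lc,[oA,oA]), ([oA],Rc,[oA]), ([],Lc,[oA]), ([],Rc,[])]"
    by (rule stp[OF natr[where x=oA and d="[oA]" and P="[([],Si,[])]"], where i=5 and l="[]" and r="[oM,oA,oA]" and Y="[([oM],Dl,[oA]), ([oM,oA,oA],Dl,[]), ([oM,oA],(Br oA oA),[oA]), ([],(Br oM oA),[oA,oA,oA]), ([oA],(Br oM oA),[oA,oA]), ([],(Br oA oA),[oM,oA,oA]), ([oA],Si,[oM,oA,oA]), ([oA],Sm,[oM,oA,oA]), ([],Si,[oA,oM,oA,oA]), ([],Sm,[oA,oM,oA,oA]), ([oA],Lc,[oA,oA]), ([oA],Rc,[oA]), ([],Lc,[oA]), ([],Rc,[])]"]) (simp_all add: rw_def)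
  also have "\<dots> = ev [oM,oA,oA] [([oM],Dl,[oA]), ([oM,oA,oA],Dl,[]), ([oM,oA],(Br oA oA),[oA]), ([],(Br oM oA),[oA,oA,oA]), ([oA],(Br oM oA),[oA,oA]), ([],Si,[oA,oM,oA,oA]), ([],Sm,[oA,oM,oA,oA]), ([],(Br oA oA),[oM,oA,oA]), ([],Si,[oA,oM,oA,oA]), ([],Sm,[oA,oM,oA,oA]), ([oA],Lc,[oA,oA]), ([oA],Rc,[oA]), ([],Lc,[oA]), ([],Rc,[])]"
    by (rule stp[OF natr[where x=oA and d="[oA]" and P="[([],Sm,[])]"], where i=6 and l="[]" and r="[oM,oA,oA]" and Y="[([oM],Dl,[oA]), ([oM,oA,oA],Dl,[]), ([oM,oA],(Br oA oA),[oA]), ([],(Br oM oA),[oA,oA,oA]), ([oA],(Br oM oA),[oA,oA]), ([],Si,[oA,oM,oA,oA]), ([],(Br oA oA),[oM,oA,oA]), ([oA],Sm,[oM,oA,oA]), ([],Si,[oA,oM,oA,oA]), ([],Sm,[oA,oM,oA,oA]), ([oA],Lc,[oA,oA]), ([oA],Rc,[oA]), ([],Lc,[oA]), ([],Rc,[])]"]) (simp_all add: rw_def)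
  also have "\<dots> = ev [oM,oA,oA] [([oM],Dl,[oA]), ([oM,oA,oA],Dl,[]), ([],(Br oM oA),[oA,oA,oA]), ([],Si,[oM,oA,oA,oA]), ([],Sm,[oM,oA,oA,oA]), ([],Lc,[oA,oA,oA]), ([],Rc,[oA,oA]), ([],(Br oM oA),[oA]), ([],Si,[oM,oA]), ([],Sm,[oM,oA]), ([],Lc,[oA]), ([],Rc,[])]"
    by (rule stp[OF natr[where x=oA and d="[oA,oM,oA]" and P="[([],Lc,[oA]), ([],Rc,[])]"], where i=5 and l="[]" and r="[oA]" and Y="[([oM],Dl,[oA]), ([oM,oA,oA],Dl,[]), ([],(Br oM oA),[oA,oA,oA]), ([],Si,[oM,oA,oA,oA]), ([],Sm,[oM,oA,oA,oA]), ([oA,oM],(Br oA oA),[oA]), ([oA],(Br oM oA),[oA,oA]), ([],(Br oA oA),[oM,oA,oA]), ([oA],Lc,[oA,oA]), ([oA],Rc,[oA]), ([],Si,[oM,oA]), ([],Sm,[oM,oA]), ([],Lc,[oA]), ([],Rc,[])]"]) (simp_all add: rw_def)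
  also have "\<dots> = ev [oM,oA,oA] [([oM],Dl,[oA]), ([],(Br oM oA),[oA,oA]), ([],Si,[oM,oA,oA]), ([],Sm,[oM,oA,oA]), ([],Lc,[oA,oA]), ([],Rc,[oA]), ([oM],Dl,[]), ([],(Br oM oA),[oA]), ([],Si,[oM,oA]), ([],Sm,[oM,oA]), ([],Lc,[oA]), ([],Rc,[])]"
    by (rule stpI) simp_all
  finally have E: "ev [oM,oA,oA] [([oM],Mu,[]), ([oM],Dl,[]), ([],(Br oM oA),[oA]), ([],Si,[oM,oA]), ([],Sm,[oM,oA]), ([],Lc,[oA]), ([],Rc,[])] = ev [oM,oA,oA] [([oM],Dl,[oA]), ([],(Br oM oA),[oA,oA]), ([],Si,[oM,oA,oA]), ([],Sm,[oM,oA,oA]), ([],Lc,[oA,oA]), ([],Rc,[oA]), ([oM],Dl,[]), ([],(Br oM oA),[oA]), ([],Si,[oM,oA]), ([],Sm,[oM,oA]), ([],Lc,[oA]), ([],Rc,[])]" .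
  then show ?thesis unfolding geq_def by simp
qed

end

context hctx begin

abbreviation "TWL \<equiv> [([oM],Dl,[]), ([],Br oM oA,[oA]), ([],Si,[oM,oA]), ([],Sm,[oM,oA]), ([],Lc,[oA]), ([],Rc,[])]"

lemma tw_ev: "twisted_ract C A M delta sigma Sinv lact ract = ev [oM,oA] TWL"
proof -
  have iMA: "ii (M \<oplus> A) \<in> hom C (M \<oplus> A) (M \<oplus> A)" by (simp add: idm_hom)
  have h1: "ii M \<otimes> delta \<in> hom C (M \<oplus> A) (M \<oplus> A \<oplus> A)" using obj_tar_hom[OF M_obj dl_hom] .
  have h2: "brd C M A \<otimes> ii A \<in> hom C (M \<oplus> A \<oplus> A) (A \<oplus> M \<oplus> A)"
    using tar_obj_hom[OF A_obj brd_hom[OF M_obj A_obj]] by (simp add: tob_assoc)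
  have h3: "Sinv \<otimes> ii (M \<oplus> A) \<in> hom C (A \<oplus> M \<oplus> A) (A \<oplus> M \<oplus> A)" using tar_obj_hom[OF tob_obj[OF M_obj A_obj] Sinv] .
  have h4: "sigma \<otimes> ii (M \<oplus> A) \<in> hom C (A \<oplus> M \<oplus> A) (A \<oplus> M \<oplus> A)" using tar_obj_hom[OF tob_obj[OF M_obj A_obj] sig_hom] .
  have h5: "lact \<otimes> ii A \<in> hom C (A \<oplus> M \<oplus> A) (M \<oplus> A)"
    using tar_obj_hom[OF A_obj lact_hom] by (simp add: tob_assoc)
  have h6: "ract \<in> hom C (M \<oplus> A) M" by (rule ract_hom)
  have ss: "(sigma \<cdot> Sinv) \<otimes> (ii M \<otimes> ii A) = (sigma \<otimes> ii (M \<oplus> A)) \<cdot> (Sinv \<otimes> ii (M \<oplus> A))"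
    using inter[OF Sinv sig_hom iMA iMA] id_l[OF iMA] tar_id[OF M_obj A_obj] by simp
  have "twisted_ract C A M delta sigma Sinv lact ract
      = ract \<cdot> ((lact \<otimes> ii A) \<cdot> (((sigma \<otimes> ii (M \<oplus> A)) \<cdot> (Sinv \<otimes> ii (M \<oplus> A))) \<cdot> ((brd C M A \<otimes> ii A) \<cdot> (ii M \<otimes> delta))))"
    unfolding twisted_ract_def ss ..
  also have "\<dots> = (ract \<cdot> (lact \<otimes> ii A)) \<cdot> (((sigma \<otimes> ii (M \<oplus> A)) \<cdot> (Sinv \<otimes> ii (M \<oplus> A))) \<cdot> ((brd C M A \<otimes> ii A) \<cdot> (ii M \<otimes> delta)))"
    by (rule assoc[OF cmp_hom[OF cmp_hom[OF h1 h2] cmp_hom[OF h3 h4]] h5 h6])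
  also have "\<dots> = ((ract \<cdot> (lact \<otimes> ii A)) \<cdot> ((sigma \<otimes> ii (M \<oplus> A)) \<cdot> (Sinv \<otimes> ii (M \<oplus> A)))) \<cdot> ((brd C M A \<otimes> ii A) \<cdot> (ii M \<otimes> delta))"
    by (rule assoc[OF cmp_hom[OF h1 h2] cmp_hom[OF h3 h4] cmp_hom[OF h5 h6]])
  also have "(ract \<cdot> (lact \<otimes> ii A)) \<cdot> ((sigma \<otimes> ii (M \<oplus> A)) \<cdot> (Sinv \<otimes> ii (M \<oplus> A)))
       = ((ract \<cdot> (lact \<otimes> ii A)) \<cdot> (sigma \<otimes> ii (M \<oplus> A))) \<cdot> (Sinv \<otimes> ii (M \<oplus> A))"
    by (rule assoc[OF h3 h4 cmp_hom[OF h5 h6]])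
  also have "(((ract \<cdot> (lact \<otimes> ii A)) \<cdot> (sigma \<otimes> ii (M \<oplus> A))) \<cdot> (Sinv \<otimes> ii (M \<oplus> A))) \<cdot> ((brd C M A \<otimes> ii A) \<cdot> (ii M \<otimes> delta))
      = ((((ract \<cdot> (lact \<otimes> ii A)) \<cdot> (sigma \<otimes> ii (M \<oplus> A))) \<cdot> (Sinv \<otimes> ii (M \<oplus> A))) \<cdot> (brd C M A \<otimes> ii A)) \<cdot> (ii M \<otimes> delta)"
    by (rule assoc[OF h1 h2 cmp_hom[OF h3 cmp_hom[OF h4 cmp_hom[OF h5 h6]]]])
  finally show ?thesis by simp
qed

lemma main_shallow:
  "cmp C (twisted_ract C A M delta sigma Sinv lact ract) (tar C (twisted_ract C A M delta sigma Sinv lact ract) (idm C A))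
   = cmp C (twisted_ract C A M delta sigma Sinv lact ract) (tar C (idm C M) mu)"
proof -
  let ?tw = "twisted_ract C A M delta sigma Sinv lact ract"
  have W: "wt [oM,oA] TWL" by simp
  have th: "?tw \<in> hom C (M \<oplus> A) M" using ev_hom[OF W] tw_ev by simp
  have L: "ev [oM,oA,oA] (map (wh [] [oA]) TWL @ TWL) = ?tw \<cdot> (?tw \<otimes> ii A)"
  proof -
    have w2: "wt [oM,oA,oA] (map (wh [] [oA]) TWL)" by simp
    have c2: "cdl [oM,oA,oA] (map (wh [] [oA]) TWL) = [oM,oA]" by simp
    have e1: "ev [oM,oA,oA] (map (wh [] [oA]) TWL @ TWL) = ev [oM,oA] TWL \<cdot> ev [oM,oA,oA] (map (wh [] [oA]) TWL)"
      using ev_app[OF w2, of TWL] W by (simp only: c2)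
    have e2: "ev ([] @ [oM,oA] @ [oA]) (map (wh [] [oA]) TWL) = ii (tobs []) \<otimes> (ev [oM,oA] TWL \<otimes> ii (tobs [oA]))"
      by (rule ev_wh[OF W])
    have l1: "[] @ [oM,oA] @ [oA] = [oM,oA,oA]" by simp
    have l2: "tobs [] = un C" "tobs [oA] = A" by simp_all
    have e3: "ev [oM,oA,oA] (map (wh [] [oA]) TWL) = ?tw \<otimes> ii A"
      using e2 unfolding l1 l2 tw_ev[symmetric] using tar_un(1)[OF tar_obj_hom[OF A_obj th]] by simp
    show ?thesis using e1 e3 tw_ev by simp
  qed
  have R: "ev [oM,oA,oA] ([([oM],Mu,[])] @ TWL) = ?tw \<cdot> (ii M \<otimes> mu)"
    using tw_ev by simp
  have "ev [oM,oA,oA] ([([oM],Mu,[])] @ TWL) = ev [oM,oA,oA] (map (wh [] [oA]) TWL @ TWL)"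
    using main_deep unfolding geq_def by simp
  then show ?thesis using L R by simp
qed

end

theorem mainTheorem4:
  fixes C :: "('o, 'm) bmc"
    and A M :: 'o
    and mu eta sigma delta eps S Sinv lact ract :: 'm
  assumes "braided_strict_monoidal C"
    and "is_ribbon_algebra C A mu eta sigma"
    and "is_hopf_algebra C A mu eta delta eps S"
    and "Sinv \<in> hom C A A"
    and "cmp C S Sinv = idm C A" and "cmp C Sinv S = idm C A"
    and "is_bimodule C A mu eta M lact ract"
  shows "cmp C (twisted_ract C A M delta sigma Sinv lact ract)
            (tar C (twisted_ract C A M delta sigma Sinv lact ract) (idm C A))
       = cmp C (twisted_ract C A M delta sigma Sinv lact ract) (tar C (idm C M) mu)"
proof -
  interpret bsm C by unfold_locales (rule assms(1))
  have A: "A \<in> Obj C" using assms(2) unfolding is_ribbon_algebra_def is_algebra_def by auto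
  obtain bi where bi: "bi \<in> hom C (tob C A A) (tob C A A)" "cmp C bi (brd C A A) = idm C (tob C A A)"
      "cmp C (brd C A A) bi = idm C (tob C A A)"
    using brd_iso[OF A A] unfolding iso_mor_def by auto
  interpret hctx C A M mu eta sigma delta eps S Sinv lact ract bi
    by unfold_locales (use assms bi in auto)
  show ?thesis by (rule main_shallow)
qed

end
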